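(* Let $(\mathcal{X},c)$ be a metric space with diameter at most $1$, and let $p\ge 1$ and $k\ge 0$. Then $\mathrm{RPW}_{p,k}(\cdot,\cdot)$ is a metric on the set of Borel probability distributions on $\mathcal{X}$. That is, for all probability distributions $\mu,\nu,\kappa$ on $\mathcal{X}$: (i) $\mathrm{RPW}_{p,k}(\mu,\mu)=0$; (ii) $\mathrm{RPW}_{p,k}(\mu,\nu)>0$ whenever $\mu\neq\nu$; (iii) $\mathrm{RPW}_{p,k}(\mu,\nu)=\mathrm{RPW}_{p,k}(\nu,\mu)$; (iv) $\mathrm{RPW}_{p,k}(\mu,\nu)\le \mathrm{RPW}_{p,k}(\mu,\kappa)+\mathrm{RPW}_{p,k}(\kappa,\nu)$.
   Context: $(\mathcal{X},c)$ is a (compact) metric space with $c(x,y)\le 1$ for all $x,y\in\mathcal{X}$; distributions are Borel probability measures on $\mathcal{X}$. For $p\in[1,\infty)$, $\alpha\in[0,1]$ and probability distributions $\mu,\nu$, a partial transport plan of mass $\alpha$ is a nonnegative Borel measure $\gamma$ on $\mathcal{X}\times\mathcal{X}$ of total mass $\alpha$ whose first marginal is dominated by $\mu$ and whose second marginal is dominated by $\nu$ (setwise). Its cost is $w_p(\gamma)=\left(\int c(x,y)^p\,d\gamma(x,y)\right)^{1/p}$. The $\alpha$-partial $p$-Wasserstein distance is $W_{p,\alpha}(\mu,\nu)=\inf w_p(\gamma)$ over all partial transport plans of mass $\alpha$; for $\alpha=1$ this is the $p$-Wasserstein distance $W_p(\mu,\nu)$. For $k\ge 0$, the $(p,k)$-RPW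 distance is $\mathrm{RPW}_{p,k}(\mu,\nu)=\inf\{\varepsilon\in[0,1] : W_{p,1-\varepsilon}(\mu,\nu)\le k\varepsilon\}$. *)

theory Defs
  imports "HOL-Probability.Probability"
begin

definition prob_dist :: "'a::metric_space measure \<Rightarrow> bool" where
  "prob_dist \<mu> \<longleftrightarrow> prob_space \<mu> \<and> sets \<mu> = sets (borel :: 'a measure)"

definition partial_plan ::
  "'a::metric_space measure \<Rightarrow> 'a measure \<Rightarrow> real \<Rightarrow> ('a \<times> 'a) measure \<Rightarrow> bool" where
  "partial_plan \<mu> \<nu> \<alpha> \<gamma> \<longleftrightarrow>
     sets \<gamma> = sets (borel :: ('a \<times> 'a) measure) \<and>
     emeasure \<gamma> (space \<gamma>) = ennreal \<alpha> \<and>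
     (\<forall>A \<in> sets (borel :: 'a measure). emeasure \<gamma> (A \<times> UNIV) \<le> emeasure \<mu> A) \<and>
     (\<forall>B \<in> sets (borel :: 'a measure). emeasure \<gamma> (UNIV \<times> B) \<le> emeasure \<nu> B)"

definition wcost :: "real \<Rightarrow> ('a::metric_space \<times> 'a) measure \<Rightarrow> real" where
  "wcost p \<gamma> = (enn2real (\<integral>\<^sup>+ z. ennreal (dist (fst z) (snd z) powr p) \<partial>\<gamma>)) powr (1 / p)"

definition partial_W :: "real \<Rightarrow> real \<Rightarrow> 'a::metric_space measure \<Rightarrow> 'a measure \<Rightarrow> real" where
  "partial_W p \<alpha> \<mu> \<nu> = Inf {wcost p \<gamma> | \<gamma>. partial_plan \<mu> \<nu> \<alpha> \<gamma>}"

definition RPW :: "real \<Rightarrow> real \<Rightarrow> 'a::metric_space measure \<Rightarrow> 'a measure \<Rightarrow> real" where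
  "RPW p k \<mu> \<nu> = Inf {\<epsilon> \<in> {0..1}. partial_W p (1 - \<epsilon>) \<mu> \<nu> \<le> k * \<epsilon>}"

end

theory Submission
  imports Defs
begin

lemma dense_countable:
  assumes "compact (UNIV::'a set)"
  obtains D :: "'a::metric_space set" where "countable D" "\<And>x e. e > 0 \<Longrightarrow> \<exists>q\<in>D. dist x q < e"
proof -
  have tb: "\<forall>e>0. \<exists>k. finite k \<and> k \<subseteq> (UNIV::'a set) \<and> UNIV \<subseteq> (\<Union>x\<in>k. ball x e)"
    by (rule seq_compact_imp_totally_bounded[OF compact_imp_seq_compact[OF assms]])
  have "\<forall>n::nat. \<exists>k. finite k \<and> (UNIV::'a set) \<subseteq> (\<Union>x\<in>k. ball x (1/(Suc n)))"
  proof
    fix n :: nat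
    have "1/(Suc n) > (0::real)" by simp
    from tb[rule_format, OF this] obtain k where "finite k" "(UNIV::'a set) \<subseteq> (\<Union>x\<in>k. ball x (1/(Suc n)))"
      by (elim exE conjE) 
    then show "\<exists>k. finite k \<and> (UNIV::'a set) \<subseteq> (\<Union>x\<in>k. ball x (1/(Suc n)))"
      by (intro exI[of _ k] conjI)
  qed
  then obtain K where K: "\<And>n::nat. finite (K n) \<and> (UNIV::'a set) \<subseteq> (\<Union>x\<in>K n. ball x (1/(Suc n)))"
    by metis
  show ?thesis
  proof
    show "countable (\<Union>n. K n)" using K by (auto intro: countable_finite)
    fix x :: 'a and e :: real assume "e > 0"
    then obtain n where n: "1 / real (Suc n) < e" by (metis nat_approx_posE)
    from K[of n] obtain q where "q \<in> K n" "x \<in> ball q (1/(Suc n))" by blast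
    then have "dist x q < e" using n by (simp add: dist_commute)
    then show "\<exists>q\<in>\<Union>n. K n. dist x q < e" using \<open>q \<in> K n\<close> by blast
  qed
qed

definition rect :: "'a::metric_space \<times> 'a \<times> nat \<Rightarrow> ('a \<times> 'a) set" where
  "rect i = ball (fst i) (1/Suc (snd (snd i))) \<times> ball (fst (snd i)) (1/Suc (snd (snd i)))"

lemma sets_borel_prod_compact:
  assumes "compact (UNIV::'a::metric_space set)"
  shows "sets (borel \<Otimes>\<^sub>M borel :: ('a\<times>'a) measure) = sets (borel :: ('a\<times>'a) measure)"
proof
  show "sets (borel \<Otimes>\<^sub>M borel :: ('a\<times>'a) measure) \<subseteq> sets borel"
  proof (rule sets_pair_in_sets)
    fix a b :: "'a set" assume "a \<in> sets borel" "b \<in> sets borel"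
    moreover have "fst \<in> borel_measurable (borel :: ('a\<times>'a) measure)"
      by (intro borel_measurable_continuous_onI continuous_intros)
    moreover have "snd \<in> borel_measurable (borel :: ('a\<times>'a) measure)"
      by (intro borel_measurable_continuous_onI continuous_intros)
    ultimately have "fst -` a \<inter> space borel \<in> sets (borel :: ('a\<times>'a) measure)"
         "snd -` b \<inter> space borel \<in> sets (borel :: ('a\<times>'a) measure)"
      by (auto simp del: space_borel intro: measurable_sets)
    moreover have "a \<times> b = (fst -` a \<inter> space borel) \<inter> (snd -` b \<inter> space borel)" by auto
    ultimately show "a \<times> b \<in> sets borel" by (metis sets.Int)
  qed
next
  obtain D :: "'a set" where D: "countable D" "\<And>x e. e > 0 \<Longrightarrow> \<exists>q\<in>D. dist x q < e"
    using dense_countable[OF assms] by blast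
  let ?I = "D \<times> D \<times> (UNIV::nat set)"
  let ?R = "rect :: 'a\<times>'a\<times>nat \<Rightarrow> _"
  have opn: "S \<in> sets (borel \<Otimes>\<^sub>M borel :: ('a\<times>'a) measure)" if "open S" for S :: "('a\<times>'a) set"
  proof -
    let ?J = "{i \<in> ?I. ?R i \<subseteq> S}"
    have Seq: "S = (\<Union>i\<in>?J. ?R i)"
    proof
      show "(\<Union>i\<in>?J. ?R i) \<subseteq> S" by blast
      show "S \<subseteq> (\<Union>i\<in>?J. ?R i)"
      proof
        fix z assume "z \<in> S"
        obtain x y where z: "z = (x,y)" by (cases z)
        from \<open>open S\<close> \<open>z \<in> S\<close> obtain e where e: "e > 0" "ball z e \<subseteq> S"
          by (meson open_contains_ball)
        have e4: "e/4 > 0" using e by simp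
        obtain n where n: "1 / real (Suc n) < e / 4" using nat_approx_posE[OF e4] by blast
        have pos: "1 / real (Suc n) > 0" by simp
        obtain q where q: "q \<in> D" "dist x q < 1/Suc n" using D(2)[OF pos, of x] by blast
        obtain q' where q': "q' \<in> D" "dist y q' < 1/Suc n" using D(2)[OF pos, of y] by blast
        have sub: "?R (q,q',n) \<subseteq> S"
        proof
          fix w assume "w \<in> ?R (q,q',n)"
          then obtain u v where w: "w = (u,v)" "dist q u < 1/Suc n" "dist q' v < 1/Suc n" by (auto simp: rect_def)
          have du: "dist x u < 2/Suc n" using q(2) w(2) dist_triangle[of x u q] by simp
          have dv: "dist y v < 2/Suc n" using q'(2) w(3) dist_triangle[of y v q'] by simp
          have "dist z w = sqrt ((dist x u)\<^sup>2 + (dist y v)\<^sup>2)" 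
            unfolding z w(1) by (rule dist_Pair_Pair)
          also have "\<dots> \<le> \<bar>dist x u\<bar> + \<bar>dist y v\<bar>" by (rule sqrt_sum_squares_le_sum_abs)
          also have "\<dots> < e" using du dv n by simp
          finally have "dist z w < e" .
          then show "w \<in> S" using e(2) by (auto simp: dist_commute)
        qed
        moreover have "z \<in> ?R (q,q',n)" using q q' z by (simp add: dist_commute rect_def)
        ultimately have zR: "z \<in> ?R (q,q',n)" by simp
        have "(q,q',n) \<in> ?J" using q(1) q'(1) sub by simp
        show "z \<in> (\<Union>i\<in>?J. ?R i)" by (rule UN_I[where B=rect, OF \<open>(q,q',n) \<in> ?J\<close> zR])
      qed
    qed
    have cI: "countable ?I" using D(1) by simp
    have cJ: "countable ?J" by (rule countable_subset[OF _ cI]) (rule subsetI, simp)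
    moreover have "?R i \<in> sets (borel \<Otimes>\<^sub>M borel)" for i
    proof -
      obtain q q' n where "i = (q,q',n)" by (cases i) 
      show ?thesis unfolding rect_def by (intro pair_measureI) auto
    qed
    then have "?R ` ?J \<subseteq> sets (borel \<Otimes>\<^sub>M borel)" by (intro image_subsetI)
    then have "(\<Union>i\<in>?J. ?R i) \<in> sets (borel \<Otimes>\<^sub>M borel)" by (rule sets.countable_UN'[OF cJ])
    then show ?thesis by (subst Seq)
  qed
  show "sets (borel :: ('a\<times>'a) measure) \<subseteq> sets (borel \<Otimes>\<^sub>M borel)"
    unfolding sets_borel
  proof (rule sets.sigma_sets_subset')
    show "{S. open S} \<subseteq> sets (borel \<Otimes>\<^sub>M borel :: ('a\<times>'a) measure)" by (intro subsetI, simp, rule opn)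
    show "UNIV \<in> sets (borel \<Otimes>\<^sub>M borel :: ('a\<times>'a) measure)" 
    proof -
      have "space (borel \<Otimes>\<^sub>M borel :: ('a\<times>'a) measure) = UNIV" by (simp add: space_pair_measure)
      then show ?thesis using sets.top[of "borel \<Otimes>\<^sub>M borel :: ('a\<times>'a) measure"] by simp
    qed
  qed
qed

lemma split_pow:
  fixes u v t p :: real
  assumes u: "u \<ge> 0" and v: "v \<ge> 0" and t: "0 < t" "t < 1" and p: "p \<ge> 1"
  shows "(u+v) powr p \<le> t powr (1-p) * u powr p + (1-t) powr (1-p) * v powr p"
proof -
  have g1: "1 \<le> t powr (1-p)" using powr_mono'[of "1-p" 0 t] t p by simp
  have g2: "1 \<le> (1-t) powr (1-p)" using powr_mono'[of "1-p" 0 "1-t"] t p by simp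
  have tp: "t * (x / t) powr p = t powr (1-p) * x powr p" if "x \<ge> 0" for x
  proof -
    have "t powr (1-p) = t / t powr p" using powr_diff[of t 1 p] t by simp
    then show ?thesis using that t by (simp add: powr_divide)
  qed
  have tp2: "(1-t) * (x / (1-t)) powr p = (1-t) powr (1-p) * x powr p" if "x \<ge> 0" for x
  proof -
    have "(1-t) powr (1-p) = (1-t) / (1-t) powr p" using powr_diff[of "1-t" 1 p] t by simp
    then show ?thesis using that t by (simp add: powr_divide)
  qed
  show ?thesis
  proof (cases "u = 0 \<or> v = 0")
    case True
    then show ?thesis
    proof
      assume "u = 0"
      then show ?thesis using g2 v by (simp add: mult_le_cancel_right1)
    next
      assume "v = 0"
      then show ?thesis using g1 u by (simp add: mult_le_cancel_right1)
    qed
  next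
    case False
    then have up: "u/t > 0" and vp: "v/(1-t) > 0" using u v t by auto
    have "((1 - (1-t)) *\<^sub>R (u/t) + (1-t) *\<^sub>R (v/(1-t))) powr p
          \<le> (1 - (1-t)) * (u/t) powr p + (1-t) * (v/(1-t)) powr p"
      using convex_onD[OF powr_convex[OF p], of "1-t" "u/t" "v/(1-t)"] up vp t by simp
    also have "\<dots> = t powr (1-p) * u powr p + (1-t) powr (1-p) * v powr p"
      using tp[OF u] tp2[OF v] by simp
    also have "((1 - (1-t)) *\<^sub>R (u/t) + (1-t) *\<^sub>R (v/(1-t))) = u + v" using t by simp
    finally show ?thesis .
  qed
qed

lemma minkowski_nn:
  fixes f g :: "'b \<Rightarrow> real" and p a b d :: real
  assumes f: "f \<in> borel_measurable M" and g: "g \<in> borel_measurable M"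
    and f0: "\<And>x. f x \<ge> 0" and g0: "\<And>x. g x \<ge> 0"
    and p: "p \<ge> 1" and a: "a \<ge> 0" and b: "b \<ge> 0" and d: "d > 0"
    and If: "(\<integral>\<^sup>+ x. ennreal (f x powr p) \<partial>M) \<le> ennreal (a powr p)"
    and Ig: "(\<integral>\<^sup>+ x. ennreal (g x powr p) \<partial>M) \<le> ennreal (b powr p)"
  shows "(\<integral>\<^sup>+ x. ennreal ((f x + g x) powr p) \<partial>M) \<le> ennreal ((a + b + d) powr p)"
proof -
  define A where "A = a + d/2"
  define B where "B = b + d/2"
  have A: "A > 0" and B: "B > 0" using a b d by (auto simp: A_def B_def)
  define t where "t = A / (A + B)"
  have t: "0 < t" "t < 1" using A B by (auto simp: t_def)
  have 1: "1 - t = B / (A+B)" using A B by (simp add: t_def field_simps)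
  have "(\<integral>\<^sup>+ x. ennreal ((f x + g x) powr p) \<partial>M)
     \<le> (\<integral>\<^sup>+ x. ennreal (t powr (1-p)) * ennreal (f x powr p) + ennreal ((1-t) powr (1-p)) * ennreal (g x powr p) \<partial>M)"
    using split_pow[OF f0 g0 t p]
    by (intro nn_integral_mono) (simp add: ennreal_mult[symmetric] ennreal_plus[symmetric] del: ennreal_plus)
  also have "\<dots> = ennreal (t powr (1-p)) * (\<integral>\<^sup>+ x. ennreal (f x powr p) \<partial>M) + ennreal ((1-t) powr (1-p)) * (\<integral>\<^sup>+ x. ennreal (g x powr p) \<partial>M)"
    using f g by (simp add: nn_integral_add nn_integral_cmult)
  also have "\<dots> \<le> ennreal (t powr (1-p)) * ennreal (a powr p) + ennreal ((1-t) powr (1-p)) * ennreal (b powr p)"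
    by (intro add_mono mult_left_mono If Ig) auto
  also have "\<dots> = ennreal (t powr (1-p) * a powr p + (1-t) powr (1-p) * b powr p)"
    by (simp add: ennreal_mult[symmetric] ennreal_plus[symmetric] del: ennreal_plus)
  also have "\<dots> \<le> ennreal (t powr (1-p) * A powr p + (1-t) powr (1-p) * B powr p)"
    using a b d p by (intro ennreal_leI add_mono mult_left_mono powr_mono2) (auto simp: A_def B_def)
  also have "t powr (1-p) * A powr p + (1-t) powr (1-p) * B powr p = (A + B) powr p"
  proof -
    have inv: "(A+B) powr (p-1) = inverse ((A+B) powr (1-p))" using powr_minus[of "A+B" "1-p"] by simp
    have e1: "t powr (1-p) * A powr p = A * (A+B) powr (p-1)"
    proof -
      have "t powr (1-p) * A powr p = (A powr (1-p) * A powr p) / (A+B) powr (1-p)"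
        using A B by (simp add: t_def powr_divide)
      also have "A powr (1-p) * A powr p = A" using A by (simp add: powr_add[symmetric])
      finally show ?thesis by (simp add: inv divide_inverse)
    qed
    have e2: "(1-t) powr (1-p) * B powr p = B * (A+B) powr (p-1)"
    proof -
      have "(1-t) powr (1-p) * B powr p = (B powr (1-p) * B powr p) / (A+B) powr (1-p)"
        using A B by (simp add: 1 powr_divide)
      also have "B powr (1-p) * B powr p = B" using B by (simp add: powr_add[symmetric])
      finally show ?thesis by (simp add: inv divide_inverse)
    qed
    have "(A + B) * (A+B) powr (p-1) = (A+B) powr p"
      using A B powr_add[of "A+B" 1 "p-1"] by simp
    then show ?thesis using e1 e2 by (simp add: distrib_right)
  qed
  also have "A + B = a + b + d" by (simp add: A_def B_def)
  finally show ?thesis .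
qed

definition cst :: "real \<Rightarrow> ('a::metric_space \<times> 'a) measure \<Rightarrow> ennreal" where
  "cst p \<gamma> = (\<integral>\<^sup>+ z. ennreal (dist (fst z) (snd z) powr p) \<partial>\<gamma>)"

lemma dist_meas_borel: "(\<lambda>z::'a::metric_space\<times>'a. dist (fst z) (snd z)) \<in> borel_measurable borel"
proof -
  have c: "continuous_on UNIV (\<lambda>z::'a\<times>'a. dist (fst z) (snd z))" by (intro continuous_intros)
  show ?thesis by (rule borel_measurable_continuous_onI[OF c])
qed

lemma meas_cost:
  assumes "sets \<gamma> = sets (borel :: ('a::metric_space \<times> 'a) measure)"
  shows "(\<lambda>z. ennreal (dist (fst z) (snd z) powr p)) \<in> borel_measurable \<gamma>"
proof -
  note [measurable] = dist_meas_borel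
  have "(\<lambda>z::'a\<times>'a. ennreal (dist (fst z) (snd z) powr p)) \<in> borel_measurable borel" by measurable
  then show ?thesis by (subst measurable_cong_sets[OF assms refl])
qed

lemma plan_basic:
  assumes "partial_plan \<mu> \<nu> \<alpha> \<gamma>"
  shows "sets \<gamma> = sets borel" "space \<gamma> = UNIV" "emeasure \<gamma> UNIV = ennreal \<alpha>" "finite_measure \<gamma>"
proof -
  show s: "sets \<gamma> = sets borel" using assms by (simp add: partial_plan_def)
  show sp: "space \<gamma> = UNIV" using sets_eq_imp_space_eq[OF s] by simp
  show "emeasure \<gamma> UNIV = ennreal \<alpha>" using assms sp by (simp add: partial_plan_def)
  then show "finite_measure \<gamma>" using sp by (intro finite_measureI) simp
qed

lemma cst_le_mass:
  assumes "sets \<gamma> = sets (borel :: ('a::metric_space \<times> 'a) measure)" and p: "p > 0"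
    and d1: "\<forall>x y::'a. dist x y \<le> 1"
  shows "cst p \<gamma> \<le> emeasure \<gamma> (space \<gamma>)"
proof -
  have "cst p \<gamma> \<le> (\<integral>\<^sup>+ z. 1 \<partial>\<gamma>)"
    unfolding cst_def
  proof (intro nn_integral_mono)
    fix z :: "'a \<times> 'a"
    have "dist (fst z) (snd z) powr p \<le> 1" using d1 p by (intro powr_le1) auto
    then show "ennreal (dist (fst z) (snd z) powr p) \<le> 1" by (simp add: ennreal_le_1)
  qed
  then show ?thesis by simp
qed

lemma wcost_nonneg: "wcost p \<gamma> \<ge> 0"
  unfolding wcost_def by simp

lemma wcost_cst: "wcost p \<gamma> = enn2real (cst p \<gamma>) powr (1/p)"
  unfolding wcost_def cst_def ..

lemma cst_eq:
  assumes "cst p \<gamma> \<noteq> \<infinity>" and p: "p > 0"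
  shows "cst p \<gamma> = ennreal (wcost p \<gamma> powr p)"
proof -
  have "wcost p \<gamma> powr p = enn2real (cst p \<gamma>)"
    unfolding wcost_cst using p by (simp add: powr_powr)
  then show ?thesis using assms by (simp add: ennreal_enn2real_if)
qed

lemma wcost_le:
  assumes "cst p \<gamma> \<le> ennreal (c powr p)" and c: "c \<ge> 0" and p: "p > 0"
  shows "wcost p \<gamma> \<le> c"
proof -
  have "enn2real (cst p \<gamma>) \<le> c powr p"
    using enn2real_mono[OF assms(1)] by simp
  then have "enn2real (cst p \<gamma>) powr (1/p) \<le> (c powr p) powr (1/p)"
    using p by (intro powr_mono2) auto
  also have "\<dots> = c" using p c by (simp add: powr_powr)
  finally show ?thesis unfolding wcost_cst .
qed

lemma cst_plan_finite:
  fixes \<mu> :: "'a::metric_space measure"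
  assumes "partial_plan \<mu> \<nu> \<alpha> \<gamma>" and p: "p > 0" and d1: "\<forall>x y::'a::metric_space. dist x y \<le> 1"
  shows "cst p \<gamma> \<noteq> \<infinity>"
proof -
  have "cst p \<gamma> \<le> emeasure \<gamma> (space \<gamma>)"
    by (rule cst_le_mass) (use plan_basic[OF assms(1)] p d1 in auto)
  also have "\<dots> = ennreal \<alpha>" using plan_basic[OF assms(1)] by simp
  also have "\<dots> < \<infinity>" by simp
  finally show ?thesis by simp
qed

lemma prob_dist_basic:
  assumes "prob_dist \<mu>"
  shows "prob_space \<mu>" "sets \<mu> = sets borel" "space \<mu> = UNIV" "emeasure \<mu> UNIV = 1"
proof -
  show ps: "prob_space \<mu>" and s: "sets \<mu> = sets borel" using assms by (auto simp: prob_dist_def)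
  show sp: "space \<mu> = UNIV" using sets_eq_imp_space_eq[OF s] by simp
  show "emeasure \<mu> UNIV = 1" using prob_space.emeasure_space_1[OF ps] sp by simp
qed

lemma prod_plan:
  fixes \<mu> \<nu> :: "'a::metric_space measure"
  assumes cpt: "compact (UNIV::'a set)" and mu: "prob_dist \<mu>" and nu: "prob_dist \<nu>"
    and a0: "0 \<le> \<alpha>" and a1: "\<alpha> \<le> 1"
  shows "partial_plan \<mu> \<nu> \<alpha> (density (\<mu> \<Otimes>\<^sub>M \<nu>) (\<lambda>_. ennreal \<alpha>))"
proof -
  note M = prob_dist_basic[OF mu] and N = prob_dist_basic[OF nu]
  interpret N: prob_space \<nu> by (rule N(1))
  have sets: "sets (density (\<mu> \<Otimes>\<^sub>M \<nu>) (\<lambda>_. ennreal \<alpha>)) = sets (borel :: ('a\<times>'a) measure)"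
  proof -
    have "sets (density (\<mu> \<Otimes>\<^sub>M \<nu>) (\<lambda>_. ennreal \<alpha>)) = sets (\<mu> \<Otimes>\<^sub>M \<nu>)" by simp
    also have "\<dots> = sets (borel \<Otimes>\<^sub>M borel :: ('a\<times>'a) measure)"
      by (rule sets_pair_measure_cong[OF M(2) N(2)])
    also have "\<dots> = sets borel" by (rule sets_borel_prod_compact[OF cpt])
    finally show ?thesis .
  qed
  have spc: "space (density (\<mu> \<Otimes>\<^sub>M \<nu>) (\<lambda>_. ennreal \<alpha>)) = UNIV"
    using M(3) N(3) by (simp add: space_pair_measure)
  have em: "emeasure (density (\<mu> \<Otimes>\<^sub>M \<nu>) (\<lambda>_. ennreal \<alpha>)) (A \<times> B) = ennreal \<alpha> * (emeasure \<mu> A * emeasure \<nu> B)"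
    if "A \<in> sets borel" "B \<in> sets borel" for A B
  proof -
    have AB: "A \<times> B \<in> sets (\<mu> \<Otimes>\<^sub>M \<nu>)" using that M(2) N(2) by (intro pair_measureI) auto
    show ?thesis using emeasure_density_const[OF AB] N.emeasure_pair_measure_Times[of A \<mu> B] that M(2) N(2)
      by simp
  qed
  have le: "ennreal \<alpha> * x \<le> x" for x :: ennreal
  proof -
    have "ennreal \<alpha> * x \<le> 1 * x" using a1 by (intro mult_right_mono) (auto simp: ennreal_le_1)
    then show ?thesis by simp
  qed
  show ?thesis unfolding partial_plan_def
  proof (intro conjI ballI)
    show "sets (density (\<mu> \<Otimes>\<^sub>M \<nu>) (\<lambda>_. ennreal \<alpha>)) = sets borel" by (rule sets)
    have "emeasure (density (\<mu> \<Otimes>\<^sub>M \<nu>) (\<lambda>_. ennreal \<alpha>)) (UNIV \<times> UNIV) = ennreal \<alpha>"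
      using em[of UNIV UNIV] M(4) N(4) by simp
    then show "emeasure (density (\<mu> \<Otimes>\<^sub>M \<nu>) (\<lambda>_. ennreal \<alpha>)) (space (density (\<mu> \<Otimes>\<^sub>M \<nu>) (\<lambda>_. ennreal \<alpha>))) = ennreal \<alpha>"
      using spc by simp
  next
    fix A :: "'a set" assume A: "A \<in> sets borel"
    show "emeasure (density (\<mu> \<Otimes>\<^sub>M \<nu>) (\<lambda>_. ennreal \<alpha>)) (A \<times> UNIV) \<le> emeasure \<mu> A"
      using em[OF A, of UNIV] N(4) le by simp
  next
    fix B :: "'a set" assume B: "B \<in> sets borel"
    show "emeasure (density (\<mu> \<Otimes>\<^sub>M \<nu>) (\<lambda>_. ennreal \<alpha>)) (UNIV \<times> B) \<le> emeasure \<nu> B"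
      using em[OF _ B, of UNIV] M(4) le by simp
  qed
qed

lemma rect_borel:
  fixes A :: "'a::topological_space set" and B :: "'b::topological_space set"
  assumes "A \<in> sets borel" "B \<in> sets borel"
  shows "A \<times> B \<in> sets (borel :: ('a\<times>'b) measure)"
proof -
  have f: "fst \<in> borel_measurable (borel :: ('a\<times>'b) measure)"
    by (intro borel_measurable_continuous_onI continuous_intros)
  have s: "snd \<in> borel_measurable (borel :: ('a\<times>'b) measure)"
    by (intro borel_measurable_continuous_onI continuous_intros)
  have "fst -` A \<inter> space borel \<in> sets (borel :: ('a\<times>'b) measure)"
    using measurable_sets[OF f assms(1)] .
  moreover have "snd -` B \<inter> space borel \<in> sets (borel :: ('a\<times>'b) measure)"
    using measurable_sets[OF s assms(2)] .
  moreover have "A \<times> B = (fst -` A \<inter> space borel) \<inter> (snd -` B \<inter> space borel)" by auto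
  ultimately show ?thesis by (metis sets.Int)
qed

lemma plan_scale:
  assumes pl: "partial_plan \<mu> \<nu> m \<gamma>" and m: "0 \<le> m" and c0: "0 \<le> c" and c1: "c \<le> 1"
  shows "partial_plan \<mu> \<nu> (c*m) (density \<gamma> (\<lambda>_. ennreal c))"
    and "cst p (density \<gamma> (\<lambda>_. ennreal c)) = ennreal c * cst p \<gamma>"
proof -
  note G = plan_basic[OF pl]
  have le: "ennreal c * x \<le> x" for x :: ennreal
  proof -
    have "ennreal c * x \<le> 1 * x" using c1 by (intro mult_right_mono) (auto simp: ennreal_le_1)
    then show ?thesis by simp
  qed
  have inS: "X \<in> sets \<gamma>" if "X \<in> sets borel" for X using that G(1) by simp
  show "partial_plan \<mu> \<nu> (c*m) (density \<gamma> (\<lambda>_. ennreal c))" unfolding partial_plan_def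
  proof (intro conjI ballI)
    show "sets (density \<gamma> (\<lambda>_. ennreal c)) = sets borel" using G(1) by simp
    show "emeasure (density \<gamma> (\<lambda>_. ennreal c)) (space (density \<gamma> (\<lambda>_. ennreal c))) = ennreal (c * m)"
      using emeasure_density_const[OF sets.top[of \<gamma>]] G(2,3) c0 m by (simp add: ennreal_mult)
  next
    fix A :: "'a set" assume A: "A \<in> sets borel"
    have AU: "A \<times> UNIV \<in> sets \<gamma>" using A by (intro inS rect_borel) auto
    have "emeasure (density \<gamma> (\<lambda>_. ennreal c)) (A \<times> UNIV) = ennreal c * emeasure \<gamma> (A \<times> UNIV)"
      by (rule emeasure_density_const[OF AU])
    also have "\<dots> \<le> emeasure \<gamma> (A \<times> UNIV)" by (rule le)
    also have "\<dots> \<le> emeasure \<mu> A" using pl A by (simp add: partial_plan_def)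
    finally show "emeasure (density \<gamma> (\<lambda>_. ennreal c)) (A \<times> UNIV) \<le> emeasure \<mu> A" .
  next
    fix B :: "'a set" assume B: "B \<in> sets borel"
    have UB: "UNIV \<times> B \<in> sets \<gamma>" using B by (intro inS rect_borel) auto
    have "emeasure (density \<gamma> (\<lambda>_. ennreal c)) (UNIV \<times> B) = ennreal c * emeasure \<gamma> (UNIV \<times> B)"
      by (rule emeasure_density_const[OF UB])
    also have "\<dots> \<le> emeasure \<gamma> (UNIV \<times> B)" by (rule le)
    also have "\<dots> \<le> emeasure \<nu> B" using pl B by (simp add: partial_plan_def)
    finally show "emeasure (density \<gamma> (\<lambda>_. ennreal c)) (UNIV \<times> B) \<le> emeasure \<nu> B" .
  qed
  show "cst p (density \<gamma> (\<lambda>_. ennreal c)) = ennreal c * cst p \<gamma>"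
    unfolding cst_def using meas_cost[OF G(1)]
    by (simp add: nn_integral_density nn_integral_cmult)
qed

lemma plan_reduce:
  fixes \<mu> :: "'a::metric_space measure"
  assumes pl: "partial_plan \<mu> \<nu> m \<gamma>" and a0: "0 \<le> \<alpha>" and am: "\<alpha> \<le> m" and p: "p > 0"
    and d1: "\<forall>x y::'a. dist x y \<le> 1"
  shows "\<exists>\<gamma>'. partial_plan \<mu> \<nu> \<alpha> \<gamma>' \<and> wcost p \<gamma>' \<le> wcost p \<gamma>"
proof (cases "m = 0")
  case True
  then have "\<alpha> = m" using a0 am by simp
  then show ?thesis using pl by blast
next
  case False
  then have mpos: "m > 0" using a0 am by simp
  define c where "c = \<alpha> / m"
  have c0: "0 \<le> c" and c1: "c \<le> 1" using a0 am mpos by (auto simp: c_def)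
  have cm: "c * m = \<alpha>" using mpos by (simp add: c_def)
  note S = plan_scale[OF pl less_imp_le[OF mpos] c0 c1]
  have P: "partial_plan \<mu> \<nu> \<alpha> (density \<gamma> (\<lambda>_. ennreal c))" using S(1) mpos cm by simp
  have "cst p (density \<gamma> (\<lambda>_. ennreal c)) = ennreal c * cst p \<gamma>" using S(2) mpos by simp
  also have "\<dots> \<le> cst p \<gamma>"
  proof -
    have "ennreal c * cst p \<gamma> \<le> 1 * cst p \<gamma>" using c1 by (intro mult_right_mono) (auto simp: ennreal_le_1)
    then show ?thesis by simp
  qed
  also have "\<dots> = ennreal (wcost p \<gamma> powr p)" by (rule cst_eq[OF cst_plan_finite[OF pl p d1] p])
  finally have "wcost p (density \<gamma> (\<lambda>_. ennreal c)) \<le> wcost p \<gamma>"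
    by (rule wcost_le[OF _ wcost_nonneg p])
  then show ?thesis using P by blast
qed

lemma bdd_W: "bdd_below {wcost p \<gamma> | \<gamma>. partial_plan \<mu> \<nu> \<alpha> \<gamma>}"
  by (rule bdd_belowI[of _ 0]) (auto simp: wcost_nonneg)

lemma W_lower: "partial_plan \<mu> \<nu> \<alpha> \<gamma> \<Longrightarrow> partial_W p \<alpha> \<mu> \<nu> \<le> wcost p \<gamma>"
  unfolding partial_W_def by (rule cInf_lower[OF _ bdd_W]) blast

lemma W_nonneg: "\<exists>\<gamma>. partial_plan \<mu> \<nu> \<alpha> \<gamma> \<Longrightarrow> 0 \<le> partial_W p \<alpha> \<mu> \<nu>"
  unfolding partial_W_def by (rule cInf_greatest) (auto simp: wcost_nonneg)

lemma W_approx: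
  assumes "\<exists>\<gamma>. partial_plan \<mu> \<nu> \<alpha> \<gamma>" "\<delta> > 0"
  shows "\<exists>\<gamma>. partial_plan \<mu> \<nu> \<alpha> \<gamma> \<and> wcost p \<gamma> < partial_W p \<alpha> \<mu> \<nu> + \<delta>"
proof -
  have ne: "{wcost p \<gamma> | \<gamma>. partial_plan \<mu> \<nu> \<alpha> \<gamma>} \<noteq> {}" using assms(1) by blast
  have "Inf {wcost p \<gamma> | \<gamma>. partial_plan \<mu> \<nu> \<alpha> \<gamma>} < partial_W p \<alpha> \<mu> \<nu> + \<delta>"
    using assms(2) by (simp add: partial_W_def)
  from cInf_lessD[OF ne this] show ?thesis by blast
qed

lemma plan_exists:
  fixes \<mu> \<nu> :: "'a::metric_space measure"
  assumes "compact (UNIV::'a set)" "prob_dist \<mu>" "prob_dist \<nu>" "0 \<le> \<alpha>" "\<alpha> \<le> 1"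
  shows "\<exists>\<gamma>. partial_plan \<mu> \<nu> \<alpha> \<gamma>"
  using prod_plan[OF assms] by blast

lemma diag_plan:
  fixes \<mu> :: "'a::metric_space measure"
  assumes mu: "prob_dist \<mu>" and p: "p > 0"
  shows "partial_plan \<mu> \<mu> 1 (distr \<mu> borel (\<lambda>x. (x,x)))" "wcost p (distr \<mu> borel (\<lambda>x. (x,x))) = 0"
proof -
  note M = prob_dist_basic[OF mu]
  have mb: "(\<lambda>x::'a. (x,x)) \<in> measurable borel borel"
    by (intro borel_measurable_continuous_onI continuous_intros)
  have m: "(\<lambda>x::'a. (x,x)) \<in> measurable \<mu> borel"
    using mb by (subst measurable_cong_sets[OF M(2) refl])
  have em: "emeasure (distr \<mu> borel (\<lambda>x. (x,x))) (A \<times> B) = emeasure \<mu> (A \<inter> B)"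
    if "A \<in> sets borel" "B \<in> sets borel" for A B
  proof -
    have "A \<times> B \<in> sets (borel :: ('a\<times>'a) measure)" using that by (rule rect_borel)
    from emeasure_distr[OF m this] show ?thesis using M(3) by (simp add: vimage_def Int_def)
  qed
  show "partial_plan \<mu> \<mu> 1 (distr \<mu> borel (\<lambda>x. (x,x)))" unfolding partial_plan_def
  proof (intro conjI ballI)
    show "sets (distr \<mu> borel (\<lambda>x. (x, x))) = sets borel" by simp
    show "emeasure (distr \<mu> borel (\<lambda>x. (x, x))) (space (distr \<mu> borel (\<lambda>x. (x, x)))) = ennreal 1"
      using em[of UNIV UNIV] M(4) by simp
  next
    fix A :: "'a set" assume "A \<in> sets borel"
    then show "emeasure (distr \<mu> borel (\<lambda>x. (x, x))) (A \<times> UNIV) \<le> emeasure \<mu> A" using em[of A UNIV] by simp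
  next
    fix A :: "'a set" assume "A \<in> sets borel"
    then show "emeasure (distr \<mu> borel (\<lambda>x. (x, x))) (UNIV \<times> A) \<le> emeasure \<mu> A" using em[of UNIV A] by simp
  qed
  have "cst p (distr \<mu> borel (\<lambda>x. (x,x))) = 0"
    unfolding cst_def using meas_cost[of "distr \<mu> borel (\<lambda>x. (x,x))" p]
    by (simp add: nn_integral_distr[OF m])
  then show "wcost p (distr \<mu> borel (\<lambda>x. (x,x))) = 0" by (simp add: wcost_cst)
qed

lemma swap_plan:
  fixes \<mu> :: "'a::metric_space measure"
  assumes pl: "partial_plan \<mu> \<nu> \<alpha> \<gamma>"
  shows "partial_plan \<nu> \<mu> \<alpha> (distr \<gamma> borel (\<lambda>z. (snd z, fst z)))" "wcost p (distr \<gamma> borel (\<lambda>z. (snd z, fst z))) = wcost p \<gamma>"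
proof -
  note G = plan_basic[OF pl]
  have mb: "(\<lambda>z::'a\<times>'a. (snd z, fst z)) \<in> measurable borel borel"
    by (intro borel_measurable_continuous_onI continuous_intros)
  have m: "(\<lambda>z::'a\<times>'a. (snd z, fst z)) \<in> measurable \<gamma> borel"
    using mb by (subst measurable_cong_sets[OF G(1) refl])
  have em: "emeasure (distr \<gamma> borel (\<lambda>z. (snd z, fst z))) (A \<times> B) = emeasure \<gamma> (B \<times> A)"
    if "A \<in> sets borel" "B \<in> sets borel" for A B
  proof -
    have "A \<times> B \<in> sets (borel :: ('a\<times>'a) measure)" using that by (rule rect_borel)
    from emeasure_distr[OF m this] show ?thesis using G(2)
      by (simp add: vimage_def) (metis (mono_tags, lifting) Collect_cong mem_Times_iff Collect_mem_eq)
  qed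
  show "partial_plan \<nu> \<mu> \<alpha> (distr \<gamma> borel (\<lambda>z. (snd z, fst z)))" unfolding partial_plan_def
  proof (intro conjI ballI)
    show "sets (distr \<gamma> borel (\<lambda>z. (snd z, fst z))) = sets borel" by simp
    show "emeasure (distr \<gamma> borel (\<lambda>z. (snd z, fst z))) (space (distr \<gamma> borel (\<lambda>z. (snd z, fst z)))) = ennreal \<alpha>"
      using em[of UNIV UNIV] G(3) by simp
  next
    fix A :: "'a set" assume "A \<in> sets borel"
    then show "emeasure (distr \<gamma> borel (\<lambda>z. (snd z, fst z))) (A \<times> UNIV) \<le> emeasure \<nu> A"
      using em[of A UNIV] pl by (simp add: partial_plan_def)
  next
    fix A :: "'a set" assume "A \<in> sets borel"
    then show "emeasure (distr \<gamma> borel (\<lambda>z. (snd z, fst z))) (UNIV \<times> A) \<le> emeasure \<mu> A"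
      using em[of UNIV A] pl by (simp add: partial_plan_def)
  qed
  have "cst p (distr \<gamma> borel (\<lambda>z. (snd z, fst z))) = cst p \<gamma>"
    unfolding cst_def using meas_cost[of "distr \<gamma> borel (\<lambda>z. (snd z, fst z))" p]
    by (simp add: nn_integral_distr[OF m] dist_commute)
  then show "wcost p (distr \<gamma> borel (\<lambda>z. (snd z, fst z))) = wcost p \<gamma>" by (simp add: wcost_cst)
qed

lemma W_sym:
  fixes \<mu> :: "'a::metric_space measure"
  shows "partial_W p \<alpha> \<mu> \<nu> = partial_W p \<alpha> \<nu> \<mu>"
proof -
  have "{wcost p \<gamma> | \<gamma>. partial_plan \<mu> \<nu> \<alpha> \<gamma>} \<subseteq> {wcost p \<gamma> | \<gamma>. partial_plan \<nu> \<mu> \<alpha> \<gamma>}"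
    if "True" for \<mu> \<nu> :: "'a measure"
  proof
    fix w assume "w \<in> {wcost p \<gamma> | \<gamma>. partial_plan \<mu> \<nu> \<alpha> \<gamma>}"
    then obtain \<gamma> where "partial_plan \<mu> \<nu> \<alpha> \<gamma>" "w = wcost p \<gamma>" by blast
    moreover note sw = swap_plan[OF this(1)]
    ultimately have "partial_plan \<nu> \<mu> \<alpha> (distr \<gamma> borel (\<lambda>z. (snd z, fst z))) \<and> w = wcost p (distr \<gamma> borel (\<lambda>z. (snd z, fst z)))"
      by simp
    then show "w \<in> {wcost p \<gamma> | \<gamma>. partial_plan \<nu> \<mu> \<alpha> \<gamma>}" by blast
  qed
  then have "{wcost p \<gamma> | \<gamma>. partial_plan \<mu> \<nu> \<alpha> \<gamma>} = {wcost p \<gamma> | \<gamma>. partial_plan \<nu> \<mu> \<alpha> \<gamma>}"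
    by (intro equalityI) auto
  then show ?thesis unfolding partial_W_def by simp
qed

lemma prod_int:
  assumes f1: "finite_measure M1" and f2: "finite_measure M2"
    and f: "f \<in> borel_measurable M1" and g: "g \<in> borel_measurable M2"
  shows "(\<integral>\<^sup>+z. f (fst z) * g (snd z) \<partial>(M1 \<Otimes>\<^sub>M M2)) = (\<integral>\<^sup>+x. f x \<partial>M1) * (\<integral>\<^sup>+y. g y \<partial>M2)"
proof -
  interpret M1: finite_measure M1 by (rule f1)
  interpret M2: finite_measure M2 by (rule f2)
  interpret pair_sigma_finite M1 M2 ..
  have m: "(\<lambda>z. f (fst z) * g (snd z)) \<in> borel_measurable (M1 \<Otimes>\<^sub>M M2)"
    using f g by measurable
  have "(\<integral>\<^sup>+z. f (fst z) * g (snd z) \<partial>(M1 \<Otimes>\<^sub>M M2)) = (\<integral>\<^sup>+x. \<integral>\<^sup>+y. f x * g y \<partial>M2 \<partial>M1)"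
    using M2.nn_integral_fst[OF m] by simp
  also have "\<dots> = (\<integral>\<^sup>+x. f x * (\<integral>\<^sup>+y. g y \<partial>M2) \<partial>M1)"
    using g by (simp add: nn_integral_cmult)
  also have "\<dots> = (\<integral>\<^sup>+x. f x \<partial>M1) * (\<integral>\<^sup>+y. g y \<partial>M2)"
    using f by (simp add: nn_integral_multc)
  finally show ?thesis .
qed

lemma cells:
  assumes cpt: "compact (UNIV::'a set)" and e: "e > 0"
  obtains n :: nat and C :: "nat \<Rightarrow> 'a::metric_space set" where
    "\<And>i. C i \<in> sets borel" "disjoint_family_on C {..<n}" "(\<Union>i<n. C i) = UNIV"
    "\<And>i y y'. y \<in> C i \<Longrightarrow> y' \<in> C i \<Longrightarrow> dist y y' \<le> e"
proof -
  have e2: "e/2 > 0" using e by simp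
  from seq_compact_imp_totally_bounded[OF compact_imp_seq_compact[OF cpt]] e2
  obtain K where K: "finite K" "(UNIV::'a set) \<subseteq> (\<Union>x\<in>K. ball x (e/2))" by blast
  from K(1) obtain n f where Kf: "K = f ` {i::nat. i < n}" by (auto simp: finite_conv_nat_seg_image)
  define C where "C i = (if i < n then ball (f i) (e/2) - (\<Union>j\<in>{..<i}. ball (f j) (e/2)) else {})" for i
  show ?thesis
  proof
    fix i
    show "C i \<in> sets borel"
    proof (cases "i < n")
      case True
      have "open (\<Union>j\<in>{..<i}. ball (f j) (e/2))" by (intro open_UN) auto
      then have "ball (f i) (e/2) - (\<Union>j\<in>{..<i}. ball (f j) (e/2)) \<in> sets borel"
        by (intro sets.Diff borel_open) auto
      then show ?thesis using True by (simp add: C_def)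
    qed (simp add: C_def)
  next
    show "disjoint_family_on C {..<n}"
      unfolding disjoint_family_on_def
    proof (intro ballI impI)
      fix i j assume "i \<in> {..<n}" "j \<in> {..<n}" "i \<noteq> j"
      show "C i \<inter> C j = {}"
      proof (cases "i < j")
        case True
        then show ?thesis by (auto simp: C_def)
      next
        case False
        then have "j < i" using \<open>i \<noteq> j\<close> by simp
        then show ?thesis by (auto simp: C_def)
      qed
    qed
  next
    show "(\<Union>i<n. C i) = UNIV"
    proof (intro equalityI subsetI)
      fix y :: 'a
      have "y \<in> (\<Union>x\<in>K. ball x (e/2))" using K(2) by blast
      then have "\<exists>i. i < n \<and> y \<in> ball (f i) (e/2)" using Kf by blast
      then have ex: "\<exists>i. i < n \<and> dist (f i) y < e/2" by simp
      define i0 where "i0 = (LEAST i. i < n \<and> dist (f i) y < e/2)"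
      have i0: "i0 < n \<and> dist (f i0) y < e/2" unfolding i0_def by (rule LeastI_ex[OF ex])
      have lt: "\<not> (dist (f j) y < e/2)" if "j < i0" for j
        using not_less_Least[of j "\<lambda>i. i < n \<and> dist (f i) y < e/2"] that i0 unfolding i0_def[symmetric]
        by auto
      have "y \<in> C i0" using i0 lt by (auto simp: C_def)
      then show "y \<in> (\<Union>i<n. C i)" using i0 by blast
    qed simp
  next
    fix i y y' assume "y \<in> C i" "y' \<in> C i"
    then have "dist (f i) y < e/2" "dist (f i) y' < e/2" by (auto simp: C_def split: if_splits)
    then show "dist y y' \<le> e" using dist_triangle[of y y' "f i"] by (simp add: dist_commute)
  qed
qed

lemma meas_fst_borel:
  "f \<in> borel_measurable (borel::'a::topological_space measure) \<Longrightarrow> (\<lambda>u::'a\<times>'b::topological_space. f (fst u)) \<in> borel_measurable borel"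
proof -
  assume f: "f \<in> borel_measurable (borel::'a measure)"
  have "fst \<in> measurable (borel::('a\<times>'b) measure) borel"
    by (intro borel_measurable_continuous_onI continuous_intros)
  from measurable_compose[OF this f] show ?thesis .
qed

lemma meas_snd_borel:
  "f \<in> borel_measurable (borel::'b::topological_space measure) \<Longrightarrow> (\<lambda>u::'a::topological_space\<times>'b. f (snd u)) \<in> borel_measurable borel"
proof -
  assume f: "f \<in> borel_measurable (borel::'b measure)"
  have "snd \<in> measurable (borel::('a\<times>'b) measure) borel"
    by (intro borel_measurable_continuous_onI continuous_intros)
  from measurable_compose[OF this f] show ?thesis .
qed

lemma weight1:
  fixes a b :: real and X :: ennreal
  assumes a: "a \<ge> 0" and b: "b \<ge> 0" and X: "X \<le> ennreal a"
  shows "ennreal (min a b / (a*b)) * X * ennreal b \<le> X"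
proof (cases "a = 0 \<or> b = 0")
  case True
  then show ?thesis
  proof
    assume "a = 0" then have "X = 0" using X by simp
    then show ?thesis by simp
  next
    assume "b = 0" then show ?thesis by simp
  qed
next
  case False
  then have ap: "a > 0" and bp: "b > 0" using a b by auto
  have "ennreal (min a b / (a*b)) * X * ennreal b = ennreal (min a b / (a*b) * b) * X"
    using a b by (simp add: ennreal_mult[symmetric] mult_ac)
  also have "min a b / (a*b) * b = min a b / a" using bp by simp
  also have "ennreal (min a b / a) * X \<le> 1 * X"
    using ap b by (intro mult_right_mono) (auto simp: ennreal_le_1 divide_le_eq_1)
  finally show ?thesis by simp
qed

lemma weight2:
  fixes a b :: real and Y :: ennreal
  assumes a: "a \<ge> 0" and b: "b \<ge> 0" and Y: "Y \<le> ennreal b"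
  shows "ennreal (min a b / (a*b)) * ennreal a * Y \<le> Y"
proof -
  have "ennreal (min b a / (b*a)) * Y * ennreal a \<le> Y" by (rule weight1[OF b a Y])
  then show ?thesis by (simp add: min.commute mult.commute mult.left_commute)
qed

locale glue_setting =
  fixes \<gamma>1 \<gamma>2 :: "('a::metric_space \<times> 'a) measure" and n :: nat and C :: "nat \<Rightarrow> 'a set"
  assumes s1: "sets \<gamma>1 = sets (borel :: ('a\<times>'a) measure)"
    and s2: "sets \<gamma>2 = sets (borel :: ('a\<times>'a) measure)"
    and fin1: "finite_measure \<gamma>1" and fin2: "finite_measure \<gamma>2"
    and Cb: "\<And>i. C i \<in> sets borel"
    and Cdisj: "disjoint_family_on C {..<n}" and Ccov: "(\<Union>i<n. C i) = UNIV"
    and cpt: "compact (UNIV::'a set)"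
begin

definition ai where "ai i = enn2real (\<integral>\<^sup>+u. indicator (C i) (snd u) \<partial>\<gamma>1)"
definition bi where "bi i = enn2real (\<integral>\<^sup>+v. indicator (C i) (fst v) \<partial>\<gamma>2)"
definition wi where "wi i = min (ai i) (bi i) / (ai i * bi i)"
definition Wf where "Wf z = (\<Sum>i<n. ennreal (wi i) * indicator (C i) (snd (fst z)) * indicator (C i) (fst (snd z)))"

lemma m1: "f \<in> borel_measurable (borel :: ('a\<times>'a) measure) \<Longrightarrow> f \<in> borel_measurable \<gamma>1"
  by (subst measurable_cong_sets[OF s1 refl])
lemma m2: "f \<in> borel_measurable (borel :: ('a\<times>'a) measure) \<Longrightarrow> f \<in> borel_measurable \<gamma>2"
  by (subst measurable_cong_sets[OF s2 refl])

lemma indC: "indicator (C i) \<in> borel_measurable (borel::'a measure)"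
  by (rule borel_measurable_indicator[OF Cb])

lemma mC1: "(\<lambda>u. indicator (C i) (snd u) :: ennreal) \<in> borel_measurable \<gamma>1"
  by (rule m1[OF meas_snd_borel[OF indC]])
lemma mC2: "(\<lambda>v. indicator (C i) (fst v) :: ennreal) \<in> borel_measurable \<gamma>2"
  by (rule m2[OF meas_fst_borel[OF indC]])

lemma part:
  fixes X :: ennreal
  shows "(\<Sum>i<n. indicator (C i) y * X) = X"
proof -
  obtain j where j: "j < n" "y \<in> C j" using Ccov by blast
  have "(\<Sum>i\<in>{..<n}. (1::ennreal) * indicator (C i) y) = 1"
    by (rule sum_indicator_disjoint_family[OF Cdisj j(2)]) (use j in auto)
  then show ?thesis by (simp add: sum_distrib_right[symmetric])
qed

lemma part1:
  assumes F: "F \<in> borel_measurable \<gamma>1"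
  shows "(\<Sum>i<n. \<integral>\<^sup>+u. indicator (C i) (snd u) * F u \<partial>\<gamma>1) = (\<integral>\<^sup>+u. F u \<partial>\<gamma>1)"
proof -
  have "(\<Sum>i<n. \<integral>\<^sup>+u. indicator (C i) (snd u) * F u \<partial>\<gamma>1) = (\<integral>\<^sup>+u. (\<Sum>i<n. indicator (C i) (snd u) * F u) \<partial>\<gamma>1)"
    using F mC1 by (subst nn_integral_sum) auto
  also have "\<dots> = (\<integral>\<^sup>+u. F u \<partial>\<gamma>1)" by (simp add: part)
  finally show ?thesis .
qed

lemma part2:
  assumes H: "H \<in> borel_measurable \<gamma>2"
  shows "(\<Sum>i<n. \<integral>\<^sup>+v. indicator (C i) (fst v) * H v \<partial>\<gamma>2) = (\<integral>\<^sup>+v. H v \<partial>\<gamma>2)"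
proof -
  have "(\<Sum>i<n. \<integral>\<^sup>+v. indicator (C i) (fst v) * H v \<partial>\<gamma>2) = (\<integral>\<^sup>+v. (\<Sum>i<n. indicator (C i) (fst v) * H v) \<partial>\<gamma>2)"
    using H mC2 by (subst nn_integral_sum) auto
  also have "\<dots> = (\<integral>\<^sup>+v. H v \<partial>\<gamma>2)" by (simp add: part)
  finally show ?thesis .
qed

lemma a_eq: "(\<integral>\<^sup>+u. indicator (C i) (snd u) \<partial>\<gamma>1) = ennreal (ai i)"
proof -
  have "(\<integral>\<^sup>+u. indicator (C i) (snd u) \<partial>\<gamma>1) \<le> (\<integral>\<^sup>+u. 1 \<partial>\<gamma>1)"
    by (intro nn_integral_mono) (simp add: indicator_def)
  also have "\<dots> < \<infinity>" using finite_measure.emeasure_finite[OF fin1, of "space \<gamma>1"] by (simp add: top.not_eq_extremum)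
  finally show ?thesis unfolding ai_def by (simp add: ennreal_enn2real_if)
qed

lemma b_eq: "(\<integral>\<^sup>+v. indicator (C i) (fst v) \<partial>\<gamma>2) = ennreal (bi i)"
proof -
  have "(\<integral>\<^sup>+v. indicator (C i) (fst v) \<partial>\<gamma>2) \<le> (\<integral>\<^sup>+v. 1 \<partial>\<gamma>2)"
    by (intro nn_integral_mono) (simp add: indicator_def)
  also have "\<dots> < \<infinity>" using finite_measure.emeasure_finite[OF fin2, of "space \<gamma>2"] by (simp add: top.not_eq_extremum)
  finally show ?thesis unfolding bi_def by (simp add: ennreal_enn2real_if)
qed

lemma a_nonneg: "ai i \<ge> 0" by (simp add: ai_def)
lemma b_nonneg: "bi i \<ge> 0" by (simp add: bi_def)

lemma sep:
  assumes F: "F \<in> borel_measurable \<gamma>1" and H: "H \<in> borel_measurable \<gamma>2"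
  shows "(\<integral>\<^sup>+z. Wf z * (F (fst z) * H (snd z)) \<partial>(\<gamma>1 \<Otimes>\<^sub>M \<gamma>2))
    = (\<Sum>i<n. ennreal (wi i) * (\<integral>\<^sup>+u. indicator (C i) (snd u) * F u \<partial>\<gamma>1) * (\<integral>\<^sup>+v. indicator (C i) (fst v) * H v \<partial>\<gamma>2))"
proof -
  have eq: "Wf z * (F (fst z) * H (snd z)) = (\<Sum>i<n. ennreal (wi i) * ((indicator (C i) (snd (fst z)) * F (fst z)) * (indicator (C i) (fst (snd z)) * H (snd z))))" for z
    unfolding Wf_def sum_distrib_right by (intro sum.cong refl) (simp add: mult_ac)
  have mi: "(\<lambda>z. ennreal (wi i) * ((indicator (C i) (snd (fst z)) * F (fst z)) * (indicator (C i) (fst (snd z)) * H (snd z)))) \<in> borel_measurable (\<gamma>1 \<Otimes>\<^sub>M \<gamma>2)" for i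
  proof -
    have a: "(\<lambda>u. indicator (C i) (snd u) * F u) \<in> borel_measurable \<gamma>1" using mC1 F by (rule borel_measurable_times_ennreal)
    have b: "(\<lambda>v. indicator (C i) (fst v) * H v) \<in> borel_measurable \<gamma>2" using mC2 H by (rule borel_measurable_times_ennreal)
    show ?thesis
      by (intro borel_measurable_times_ennreal borel_measurable_const measurable_fst''[OF a] measurable_snd''[OF b])
  qed
  have "(\<integral>\<^sup>+z. Wf z * (F (fst z) * H (snd z)) \<partial>(\<gamma>1 \<Otimes>\<^sub>M \<gamma>2))
     = (\<Sum>i<n. \<integral>\<^sup>+z. ennreal (wi i) * ((indicator (C i) (snd (fst z)) * F (fst z)) * (indicator (C i) (fst (snd z)) * H (snd z))) \<partial>(\<gamma>1 \<Otimes>\<^sub>M \<gamma>2))"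
    unfolding eq by (rule nn_integral_sum) (rule mi)
  also have "\<dots> = (\<Sum>i<n. ennreal (wi i) * ((\<integral>\<^sup>+u. indicator (C i) (snd u) * F u \<partial>\<gamma>1) * (\<integral>\<^sup>+v. indicator (C i) (fst v) * H v \<partial>\<gamma>2)))"
  proof (intro sum.cong refl)
    fix i
    have a: "(\<lambda>u. indicator (C i) (snd u) * F u) \<in> borel_measurable \<gamma>1" using mC1 F by (rule borel_measurable_times_ennreal)
    have b: "(\<lambda>v. indicator (C i) (fst v) * H v) \<in> borel_measurable \<gamma>2" using mC2 H by (rule borel_measurable_times_ennreal)
    have m: "(\<lambda>z. (indicator (C i) (snd (fst z)) * F (fst z)) * (indicator (C i) (fst (snd z)) * H (snd z))) \<in> borel_measurable (\<gamma>1 \<Otimes>\<^sub>M \<gamma>2)"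
      by (intro borel_measurable_times_ennreal measurable_fst''[OF a] measurable_snd''[OF b])
    show "(\<integral>\<^sup>+z. ennreal (wi i) * ((indicator (C i) (snd (fst z)) * F (fst z)) * (indicator (C i) (fst (snd z)) * H (snd z))) \<partial>(\<gamma>1 \<Otimes>\<^sub>M \<gamma>2))
      = ennreal (wi i) * ((\<integral>\<^sup>+u. indicator (C i) (snd u) * F u \<partial>\<gamma>1) * (\<integral>\<^sup>+v. indicator (C i) (fst v) * H v \<partial>\<gamma>2))"
      using nn_integral_cmult[OF m, of "ennreal (wi i)"] prod_int[OF fin1 fin2 a b] by simp
  qed
  finally show ?thesis by (simp add: mult.assoc)
qed

end

context glue_setting
begin

lemma bound1:
  assumes F: "F \<in> borel_measurable \<gamma>1" and F1: "\<And>u. F u \<le> 1"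
  shows "(\<integral>\<^sup>+z. Wf z * F (fst z) \<partial>(\<gamma>1 \<Otimes>\<^sub>M \<gamma>2)) \<le> (\<integral>\<^sup>+u. F u \<partial>\<gamma>1)"
proof -
  have "(\<integral>\<^sup>+z. Wf z * F (fst z) \<partial>(\<gamma>1 \<Otimes>\<^sub>M \<gamma>2)) = (\<integral>\<^sup>+z. Wf z * (F (fst z) * (\<lambda>_. 1) (snd z)) \<partial>(\<gamma>1 \<Otimes>\<^sub>M \<gamma>2))"
    by simp
  also have "\<dots> = (\<Sum>i<n. ennreal (wi i) * (\<integral>\<^sup>+u. indicator (C i) (snd u) * F u \<partial>\<gamma>1) * (\<integral>\<^sup>+v. indicator (C i) (fst v) * 1 \<partial>\<gamma>2))"
    by (rule sep[OF F]) simp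
  also have "\<dots> \<le> (\<Sum>i<n. \<integral>\<^sup>+u. indicator (C i) (snd u) * F u \<partial>\<gamma>1)"
  proof (intro sum_mono)
    fix i
    have "(\<integral>\<^sup>+u. indicator (C i) (snd u) * F u \<partial>\<gamma>1) \<le> (\<integral>\<^sup>+u. indicator (C i) (snd u) \<partial>\<gamma>1)"
    proof (intro nn_integral_mono)
      fix u show "indicator (C i) (snd u) * F u \<le> (indicator (C i) (snd u) :: ennreal)"
        using F1[of u] by (cases "snd u \<in> C i") auto
    qed
    then have X: "(\<integral>\<^sup>+u. indicator (C i) (snd u) * F u \<partial>\<gamma>1) \<le> ennreal (ai i)" using a_eq by simp
    show "ennreal (wi i) * (\<integral>\<^sup>+u. indicator (C i) (snd u) * F u \<partial>\<gamma>1) * (\<integral>\<^sup>+v. indicator (C i) (fst v) * 1 \<partial>\<gamma>2)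
        \<le> (\<integral>\<^sup>+u. indicator (C i) (snd u) * F u \<partial>\<gamma>1)"
      using weight1[OF a_nonneg b_nonneg X] b_eq[of i] by (simp add: wi_def)
  qed
  also have "\<dots> = (\<integral>\<^sup>+u. F u \<partial>\<gamma>1)" by (rule part1[OF F])
  finally show ?thesis .
qed

lemma bound2:
  assumes H: "H \<in> borel_measurable \<gamma>2" and H1: "\<And>v. H v \<le> 1"
  shows "(\<integral>\<^sup>+z. Wf z * H (snd z) \<partial>(\<gamma>1 \<Otimes>\<^sub>M \<gamma>2)) \<le> (\<integral>\<^sup>+v. H v \<partial>\<gamma>2)"
proof -
  have "(\<integral>\<^sup>+z. Wf z * H (snd z) \<partial>(\<gamma>1 \<Otimes>\<^sub>M \<gamma>2)) = (\<integral>\<^sup>+z. Wf z * ((\<lambda>_. 1) (fst z) * H (snd z)) \<partial>(\<gamma>1 \<Otimes>\<^sub>M \<gamma>2))"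
    by simp
  also have "\<dots> = (\<Sum>i<n. ennreal (wi i) * (\<integral>\<^sup>+u. indicator (C i) (snd u) * 1 \<partial>\<gamma>1) * (\<integral>\<^sup>+v. indicator (C i) (fst v) * H v \<partial>\<gamma>2))"
    by (rule sep[OF _ H]) simp
  also have "\<dots> \<le> (\<Sum>i<n. \<integral>\<^sup>+v. indicator (C i) (fst v) * H v \<partial>\<gamma>2)"
  proof (intro sum_mono)
    fix i
    have "(\<integral>\<^sup>+v. indicator (C i) (fst v) * H v \<partial>\<gamma>2) \<le> (\<integral>\<^sup>+v. indicator (C i) (fst v) \<partial>\<gamma>2)"
    proof (intro nn_integral_mono)
      fix v show "indicator (C i) (fst v) * H v \<le> (indicator (C i) (fst v) :: ennreal)"
        using H1[of v] by (cases "fst v \<in> C i") auto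
    qed
    then have Y: "(\<integral>\<^sup>+v. indicator (C i) (fst v) * H v \<partial>\<gamma>2) \<le> ennreal (bi i)" using b_eq by simp
    show "ennreal (wi i) * (\<integral>\<^sup>+u. indicator (C i) (snd u) * 1 \<partial>\<gamma>1) * (\<integral>\<^sup>+v. indicator (C i) (fst v) * H v \<partial>\<gamma>2)
        \<le> (\<integral>\<^sup>+v. indicator (C i) (fst v) * H v \<partial>\<gamma>2)"
      using weight2[OF a_nonneg b_nonneg Y] a_eq[of i] by (simp add: wi_def)
  qed
  also have "\<dots> = (\<integral>\<^sup>+v. H v \<partial>\<gamma>2)" by (rule part2[OF H])
  finally show ?thesis .
qed

lemma mass:
  "(\<integral>\<^sup>+z. Wf z \<partial>(\<gamma>1 \<Otimes>\<^sub>M \<gamma>2)) = (\<Sum>i<n. ennreal (min (ai i) (bi i)))"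
proof -
  have "(\<integral>\<^sup>+z. Wf z \<partial>(\<gamma>1 \<Otimes>\<^sub>M \<gamma>2)) = (\<integral>\<^sup>+z. Wf z * ((\<lambda>_. 1) (fst z) * (\<lambda>_. 1) (snd z)) \<partial>(\<gamma>1 \<Otimes>\<^sub>M \<gamma>2))"
    by simp
  also have "\<dots> = (\<Sum>i<n. ennreal (wi i) * (\<integral>\<^sup>+u. indicator (C i) (snd u) * 1 \<partial>\<gamma>1) * (\<integral>\<^sup>+v. indicator (C i) (fst v) * 1 \<partial>\<gamma>2))"
    by (rule sep) simp_all
  also have "\<dots> = (\<Sum>i<n. ennreal (min (ai i) (bi i)))"
  proof (intro sum.cong refl)
    fix i
    have "wi i * ai i * bi i = min (ai i) (bi i)"
      using a_nonneg[of i] b_nonneg[of i] by (cases "ai i = 0 \<or> bi i = 0") (auto simp: wi_def)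
    then show "ennreal (wi i) * (\<integral>\<^sup>+u. indicator (C i) (snd u) * 1 \<partial>\<gamma>1) * (\<integral>\<^sup>+v. indicator (C i) (fst v) * 1 \<partial>\<gamma>2) = ennreal (min (ai i) (bi i))"
      using a_eq[of i] b_eq[of i] a_nonneg[of i] b_nonneg[of i]
      by (simp add: ennreal_mult[symmetric] wi_def)
  qed
  finally show ?thesis .
qed

lemma Wf_meas: "Wf \<in> borel_measurable (\<gamma>1 \<Otimes>\<^sub>M \<gamma>2)"
proof -
  have [measurable]: "(\<lambda>z. indicator (C i) (snd (fst z)) :: ennreal) \<in> borel_measurable (\<gamma>1 \<Otimes>\<^sub>M \<gamma>2)" for i
    by (rule measurable_fst''[OF mC1])
  have [measurable]: "(\<lambda>z. indicator (C i) (fst (snd z)) :: ennreal) \<in> borel_measurable (\<gamma>1 \<Otimes>\<^sub>M \<gamma>2)" for i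
    by (rule measurable_snd''[OF mC2])
  show ?thesis unfolding Wf_def[abs_def] by measurable
qed

definition T :: "(('a\<times>'a)\<times>('a\<times>'a)) \<Rightarrow> 'a\<times>'a" where "T z = (fst (fst z), snd (snd z))"
definition Lam where "Lam = density (\<gamma>1 \<Otimes>\<^sub>M \<gamma>2) Wf"
definition sig where "sig = distr Lam borel T"

lemma T_meas: "T \<in> measurable (\<gamma>1 \<Otimes>\<^sub>M \<gamma>2) borel"
proof -
  have f: "(fst :: 'a\<times>'a \<Rightarrow> 'a) \<in> borel_measurable borel" by (intro borel_measurable_continuous_onI continuous_intros)
  have s: "(snd :: 'a\<times>'a \<Rightarrow> 'a) \<in> borel_measurable borel" by (intro borel_measurable_continuous_onI continuous_intros)
  have "(\<lambda>z. (fst (fst z), snd (snd z))) \<in> measurable (\<gamma>1 \<Otimes>\<^sub>M \<gamma>2) (borel \<Otimes>\<^sub>M borel)"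
    by (intro measurable_Pair measurable_fst''[OF m1[OF f]] measurable_snd''[OF m2[OF s]])
  then show ?thesis unfolding T_def[abs_def]
    by (subst measurable_cong_sets[OF refl sets_borel_prod_compact[OF cpt, symmetric]])
qed

lemma sets_sig: "sets sig = sets borel" by (simp add: sig_def)
lemma space_sig: "space sig = UNIV" by (simp add: sig_def)

lemma sig_int:
  assumes h: "h \<in> borel_measurable (borel :: ('a\<times>'a) measure)"
  shows "(\<integral>\<^sup>+x. h x \<partial>sig) = (\<integral>\<^sup>+z. Wf z * h (T z) \<partial>(\<gamma>1 \<Otimes>\<^sub>M \<gamma>2))"
proof -
  have Tm: "T \<in> measurable Lam borel" using T_meas by (simp add: Lam_def)
  have "(\<integral>\<^sup>+x. h x \<partial>sig) = (\<integral>\<^sup>+z. h (T z) \<partial>Lam)"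
    unfolding sig_def by (rule nn_integral_distr[OF Tm]) (simp add: h)
  also have "\<dots> = (\<integral>\<^sup>+z. Wf z * h (T z) \<partial>(\<gamma>1 \<Otimes>\<^sub>M \<gamma>2))"
    unfolding Lam_def using Wf_meas measurable_compose[OF T_meas h]
    by (subst nn_integral_density) auto
  finally show ?thesis .
qed

end

context glue_setting
begin

lemma sig_emeasure:
  assumes X: "X \<in> sets (borel :: ('a\<times>'a) measure)"
  shows "emeasure sig X = (\<integral>\<^sup>+z. Wf z * indicator X (T z) \<partial>(\<gamma>1 \<Otimes>\<^sub>M \<gamma>2))"
proof -
  have "emeasure sig X = (\<integral>\<^sup>+x. indicator X x \<partial>sig)" using X sets_sig by simp
  also have "\<dots> = (\<integral>\<^sup>+z. Wf z * indicator X (T z) \<partial>(\<gamma>1 \<Otimes>\<^sub>M \<gamma>2))"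
    by (rule sig_int) (rule borel_measurable_indicator[OF X])
  finally show ?thesis .
qed

lemma marg1:
  assumes A: "A \<in> sets (borel :: 'a measure)"
  shows "emeasure sig (A \<times> UNIV) \<le> emeasure \<gamma>1 (A \<times> UNIV)"
proof -
  have AU: "A \<times> UNIV \<in> sets (borel :: ('a\<times>'a) measure)" using A by (intro rect_borel) auto
  have F: "(\<lambda>u. indicator A (fst u) :: ennreal) \<in> borel_measurable \<gamma>1"
    by (rule m1[OF meas_fst_borel[OF borel_measurable_indicator[OF A]]])
  have "emeasure sig (A \<times> UNIV) = (\<integral>\<^sup>+z. Wf z * indicator (A \<times> UNIV) (T z) \<partial>(\<gamma>1 \<Otimes>\<^sub>M \<gamma>2))"
    by (rule sig_emeasure[OF AU])
  also have "\<dots> = (\<integral>\<^sup>+z. Wf z * (\<lambda>u. indicator A (fst u)) (fst z) \<partial>(\<gamma>1 \<Otimes>\<^sub>M \<gamma>2))"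
    by (intro nn_integral_cong) (simp add: T_def indicator_def)
  also have "\<dots> \<le> (\<integral>\<^sup>+u. indicator A (fst u) \<partial>\<gamma>1)"
    by (rule bound1[OF F]) (simp add: indicator_def)
  also have "\<dots> = (\<integral>\<^sup>+u. indicator (A \<times> UNIV) u \<partial>\<gamma>1)"
    by (intro nn_integral_cong) (auto simp: indicator_def mem_Times_iff)
  also have "\<dots> = emeasure \<gamma>1 (A \<times> UNIV)" using AU s1 by simp
  finally show ?thesis .
qed

lemma marg2:
  assumes B: "B \<in> sets (borel :: 'a measure)"
  shows "emeasure sig (UNIV \<times> B) \<le> emeasure \<gamma>2 (UNIV \<times> B)"
proof -
  have UB: "UNIV \<times> B \<in> sets (borel :: ('a\<times>'a) measure)" using B by (intro rect_borel) auto
  have H: "(\<lambda>v. indicator B (snd v) :: ennreal) \<in> borel_measurable \<gamma>2"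
    by (rule m2[OF meas_snd_borel[OF borel_measurable_indicator[OF B]]])
  have "emeasure sig (UNIV \<times> B) = (\<integral>\<^sup>+z. Wf z * indicator (UNIV \<times> B) (T z) \<partial>(\<gamma>1 \<Otimes>\<^sub>M \<gamma>2))"
    by (rule sig_emeasure[OF UB])
  also have "\<dots> = (\<integral>\<^sup>+z. Wf z * (\<lambda>v. indicator B (snd v)) (snd z) \<partial>(\<gamma>1 \<Otimes>\<^sub>M \<gamma>2))"
    by (intro nn_integral_cong) (simp add: T_def indicator_def)
  also have "\<dots> \<le> (\<integral>\<^sup>+v. indicator B (snd v) \<partial>\<gamma>2)"
    by (rule bound2[OF H]) (simp add: indicator_def)
  also have "\<dots> = (\<integral>\<^sup>+v. indicator (UNIV \<times> B) v \<partial>\<gamma>2)"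
    by (intro nn_integral_cong) (auto simp: indicator_def mem_Times_iff)
  also have "\<dots> = emeasure \<gamma>2 (UNIV \<times> B)" using UB s2 by simp
  finally show ?thesis .
qed

lemma sig_mass: "emeasure sig (space sig) = (\<Sum>i<n. ennreal (min (ai i) (bi i)))"
proof -
  have "emeasure sig (space sig) = (\<integral>\<^sup>+z. Wf z * indicator UNIV (T z) \<partial>(\<gamma>1 \<Otimes>\<^sub>M \<gamma>2))"
    unfolding space_sig by (rule sig_emeasure) simp
  also have "\<dots> = (\<integral>\<^sup>+z. Wf z \<partial>(\<gamma>1 \<Otimes>\<^sub>M \<gamma>2))" by simp
  also have "\<dots> = (\<Sum>i<n. ennreal (min (ai i) (bi i)))" by (rule mass)
  finally show ?thesis .
qed

end

context glue_setting
begin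

lemma pointwise:
  assumes p: "p \<ge> 1" and diam: "\<And>i y y'. y \<in> C i \<Longrightarrow> y' \<in> C i \<Longrightarrow> dist y y' \<le> e/2"
  shows "Wf z * ennreal (dist (fst (T z)) (snd (T z)) powr p)
     \<le> Wf z * ennreal ((dist (fst (fst z)) (snd (fst z)) + (e/2 + dist (fst (snd z)) (snd (snd z)))) powr p)"
proof (cases "Wf z = 0")
  case True
  then show ?thesis by simp
next
  case False
  then obtain i where i: "i \<in> {..<n}"
    and nz: "ennreal (wi i) * indicator (C i) (snd (fst z)) * indicator (C i) (fst (snd z)) \<noteq> (0::ennreal)"
    unfolding Wf_def by (rule sum.not_neutral_contains_not_neutral)
  have y: "snd (fst z) \<in> C i" using nz by (auto simp: indicator_def split: if_splits)
  have y': "fst (snd z) \<in> C i" using nz by (auto simp: indicator_def split: if_splits)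
  have dyy: "dist (snd (fst z)) (fst (snd z)) \<le> e/2" by (rule diam[OF y y'])
  have "dist (fst (fst z)) (snd (snd z)) \<le> dist (fst (fst z)) (snd (fst z)) + dist (snd (fst z)) (snd (snd z))"
    by (rule dist_triangle)
  also have "dist (snd (fst z)) (snd (snd z)) \<le> dist (snd (fst z)) (fst (snd z)) + dist (fst (snd z)) (snd (snd z))"
    by (rule dist_triangle)
  finally have "dist (fst (T z)) (snd (T z)) \<le> dist (fst (fst z)) (snd (fst z)) + (e/2 + dist (fst (snd z)) (snd (snd z)))"
    using dyy by (simp add: T_def)
  then have "dist (fst (T z)) (snd (T z)) powr p \<le> (dist (fst (fst z)) (snd (fst z)) + (e/2 + dist (fst (snd z)) (snd (snd z)))) powr p"
    using p by (intro powr_mono2) auto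
  then show ?thesis by (intro mult_left_mono ennreal_leI) auto
qed

lemma cost_bound:
  fixes p e c1 c2 :: real
  assumes p: "p \<ge> 1" and e: "e > 0" and diam: "\<And>i y y'. y \<in> C i \<Longrightarrow> y' \<in> C i \<Longrightarrow> dist y y' \<le> e/2"
    and d1: "\<forall>x y::'a. dist x y \<le> 1" and mass1: "emeasure \<gamma>1 (space \<gamma>1) \<le> 1"
    and c1: "c1 \<ge> 0" "cst p \<gamma>1 \<le> ennreal (c1 powr p)" and c2: "c2 \<ge> 0" "cst p \<gamma>2 \<le> ennreal (c2 powr p)"
  shows "cst p sig \<le> ennreal ((c1 + c2 + e) powr p)"
proof -
  define D1 where "D1 z = dist (fst (fst z)) (snd (fst z))" for z :: "('a\<times>'a)\<times>('a\<times>'a)"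
  define D2 where "D2 z = dist (fst (snd z)) (snd (snd z))" for z :: "('a\<times>'a)\<times>('a\<times>'a)"
  have sL: "sets Lam = sets (\<gamma>1 \<Otimes>\<^sub>M \<gamma>2)" by (simp add: Lam_def)
  have mG1: "D1 \<in> borel_measurable (\<gamma>1 \<Otimes>\<^sub>M \<gamma>2)"
    unfolding D1_def[abs_def] by (rule measurable_fst''[OF m1[OF dist_meas_borel]])
  have mG2: "D2 \<in> borel_measurable (\<gamma>1 \<Otimes>\<^sub>M \<gamma>2)"
    unfolding D2_def[abs_def] by (rule measurable_snd''[OF m2[OF dist_meas_borel]])
  have mL1: "D1 \<in> borel_measurable Lam" using mG1 by (subst measurable_cong_sets[OF sL refl])
  have mL2: "D2 \<in> borel_measurable Lam" using mG2 by (subst measurable_cong_sets[OF sL refl])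
  have intL: "(\<integral>\<^sup>+z. f z \<partial>Lam) = (\<integral>\<^sup>+z. Wf z * f z \<partial>(\<gamma>1 \<Otimes>\<^sub>M \<gamma>2))" if "f \<in> borel_measurable (\<gamma>1 \<Otimes>\<^sub>M \<gamma>2)" for f
    unfolding Lam_def by (rule nn_integral_density[OF Wf_meas that])
  have pp: "p > 0" using p by simp
  have F1: "(\<lambda>u::'a\<times>'a. ennreal (dist (fst u) (snd u) powr p)) u \<le> 1" for u
    using d1 pp by (simp add: ennreal_le_1 powr_le1)
  have A: "(\<integral>\<^sup>+z. ennreal (D1 z powr p) \<partial>Lam) \<le> ennreal (c1 powr p)"
  proof -
    have "(\<integral>\<^sup>+z. ennreal (D1 z powr p) \<partial>Lam) = (\<integral>\<^sup>+z. Wf z * ennreal (D1 z powr p) \<partial>(\<gamma>1 \<Otimes>\<^sub>M \<gamma>2))"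
      by (rule intL) (use mG1 in measurable)
    also have "\<dots> = (\<integral>\<^sup>+z. Wf z * (\<lambda>u. ennreal (dist (fst u) (snd u) powr p)) (fst z) \<partial>(\<gamma>1 \<Otimes>\<^sub>M \<gamma>2))"
      by (simp add: D1_def)
    also have "\<dots> \<le> (\<integral>\<^sup>+u. ennreal (dist (fst u) (snd u) powr p) \<partial>\<gamma>1)"
      by (rule bound1[OF meas_cost[OF s1] F1])
    also have "\<dots> = cst p \<gamma>1" by (simp add: cst_def)
    finally show ?thesis using c1(2) by simp
  qed
  have B: "(\<integral>\<^sup>+z. ennreal (D2 z powr p) \<partial>Lam) \<le> ennreal (c2 powr p)"
  proof -
    have "(\<integral>\<^sup>+z. ennreal (D2 z powr p) \<partial>Lam) = (\<integral>\<^sup>+z. Wf z * ennreal (D2 z powr p) \<partial>(\<gamma>1 \<Otimes>\<^sub>M \<gamma>2))"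
      by (rule intL) (use mG2 in measurable)
    also have "\<dots> = (\<integral>\<^sup>+z. Wf z * (\<lambda>u. ennreal (dist (fst u) (snd u) powr p)) (snd z) \<partial>(\<gamma>1 \<Otimes>\<^sub>M \<gamma>2))"
      by (simp add: D2_def)
    also have "\<dots> \<le> (\<integral>\<^sup>+u. ennreal (dist (fst u) (snd u) powr p) \<partial>\<gamma>2)"
      by (rule bound2[OF meas_cost[OF s2] F1])
    also have "\<dots> = cst p \<gamma>2" by (simp add: cst_def)
    finally show ?thesis using c2(2) by simp
  qed
  have Cc: "(\<integral>\<^sup>+z. ennreal ((e/2) powr p) \<partial>Lam) \<le> ennreal ((e/2) powr p)"
  proof -
    have "emeasure Lam (space Lam) = (\<integral>\<^sup>+z. Wf z * indicator (space (\<gamma>1 \<Otimes>\<^sub>M \<gamma>2)) z \<partial>(\<gamma>1 \<Otimes>\<^sub>M \<gamma>2))"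
      unfolding Lam_def by (simp add: emeasure_density[OF Wf_meas])
    also have "\<dots> = (\<integral>\<^sup>+z. Wf z * (\<lambda>_. 1) (fst z) \<partial>(\<gamma>1 \<Otimes>\<^sub>M \<gamma>2))"
      by (intro nn_integral_cong) simp
    also have "\<dots> \<le> (\<integral>\<^sup>+u. 1 \<partial>\<gamma>1)" by (rule bound1) auto
    also have "\<dots> \<le> 1" using mass1 by simp
    finally have "emeasure Lam (space Lam) \<le> 1" .
    then have "ennreal ((e/2) powr p) * emeasure Lam (space Lam) \<le> ennreal ((e/2) powr p) * 1"
      by (intro mult_left_mono) auto
    then show ?thesis by simp
  qed
  have Dm: "(\<integral>\<^sup>+z. ennreal (((\<lambda>_. e/2) z + D2 z) powr p) \<partial>Lam) \<le> ennreal ((e/2 + c2 + e/4) powr p)"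
    by (rule minkowski_nn[OF _ mL2 _ _ p _ c2(1) _ _ B]) (use e Cc in \<open>auto simp: D2_def\<close>)
  have mL3: "(\<lambda>z. e/2 + D2 z) \<in> borel_measurable Lam" using mL2 by measurable
  have Em: "(\<integral>\<^sup>+z. ennreal ((D1 z + (e/2 + D2 z)) powr p) \<partial>Lam) \<le> ennreal ((c1 + (e/2 + c2 + e/4) + e/4) powr p)"
    by (rule minkowski_nn[OF mL1 mL3 _ _ p c1(1) _ _ A]) (use e c2 Dm in \<open>auto simp: D1_def D2_def\<close>)
  have "cst p sig = (\<integral>\<^sup>+x. ennreal (dist (fst x) (snd x) powr p) \<partial>sig)" by (simp add: cst_def)
  also have "\<dots> = (\<integral>\<^sup>+z. Wf z * ennreal (dist (fst (T z)) (snd (T z)) powr p) \<partial>(\<gamma>1 \<Otimes>\<^sub>M \<gamma>2))"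
    by (rule sig_int[OF meas_cost[OF refl]])
  also have "\<dots> \<le> (\<integral>\<^sup>+z. Wf z * ennreal ((D1 z + (e/2 + D2 z)) powr p) \<partial>(\<gamma>1 \<Otimes>\<^sub>M \<gamma>2))"
    unfolding D1_def D2_def by (intro nn_integral_mono pointwise[OF p diam]) auto
  also have "\<dots> = (\<integral>\<^sup>+z. ennreal ((D1 z + (e/2 + D2 z)) powr p) \<partial>Lam)"
    by (rule intL[symmetric]) (use mG1 mG2 in measurable)
  also have "\<dots> \<le> ennreal ((c1 + (e/2 + c2 + e/4) + e/4) powr p)" by (rule Em)
  also have "c1 + (e/2 + c2 + e/4) + e/4 = c1 + c2 + e" by simp
  finally show ?thesis .
qed

end

lemma glue:
  fixes \<mu> \<kappa> \<nu> :: "'a::metric_space measure"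
  assumes cpt: "compact (UNIV::'a set)" and d1: "\<forall>x y::'a. dist x y \<le> 1" and p: "p \<ge> 1"
    and ka: "prob_dist \<kappa>"
    and g1: "partial_plan \<mu> \<kappa> \<alpha>1 \<gamma>1" and g2: "partial_plan \<kappa> \<nu> \<alpha>2 \<gamma>2"
    and a1: "0 \<le> \<alpha>1" "\<alpha>1 \<le> 1" and a2: "0 \<le> \<alpha>2" "\<alpha>2 \<le> 1"
    and al: "0 \<le> \<alpha>" "\<alpha> \<le> \<alpha>1 + \<alpha>2 - 1" and e: "e > 0"
  shows "\<exists>\<sigma>. partial_plan \<mu> \<nu> \<alpha> \<sigma> \<and> wcost p \<sigma> \<le> wcost p \<gamma>1 + wcost p \<gamma>2 + e"
proof -
  have e2: "e/2 > 0" using e by simp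
  obtain C :: "nat \<Rightarrow> 'a set" and n where
    Cb: "\<And>i. C i \<in> sets borel" and Cd: "disjoint_family_on C {..<n}" and Cc: "(\<Union>i<n. C i) = UNIV"
    and diam: "\<And>i y y'. y \<in> C i \<Longrightarrow> y' \<in> C i \<Longrightarrow> dist y y' \<le> e/2"
    using cells[OF cpt e2] by metis
  note G1 = plan_basic[OF g1] and G2 = plan_basic[OF g2]
  note K = prob_dist_basic[OF ka]
  interpret Kp: prob_space \<kappa> by (rule K(1))
  have gs: "glue_setting \<gamma>1 \<gamma>2 n C"
    unfolding glue_setting_def by (intro conjI allI G1(1) G2(1) G1(4) G2(4) Cb Cd Cc cpt)
  interpret glue_setting \<gamma>1 \<gamma>2 n C by (rule gs)
  have pp: "p > 0" using p by simp
  define m where "m = (\<Sum>i<n. min (ai i) (bi i))"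
  have aik: "ai i \<le> measure \<kappa> (C i)" for i
  proof -
    have "ennreal (ai i) = (\<integral>\<^sup>+u. indicator (C i) (snd u) \<partial>\<gamma>1)" by (rule a_eq[symmetric])
    also have "\<dots> = (\<integral>\<^sup>+u. indicator (UNIV \<times> C i) u \<partial>\<gamma>1)"
      by (intro nn_integral_cong) (auto simp: indicator_def mem_Times_iff)
    also have "\<dots> = emeasure \<gamma>1 (UNIV \<times> C i)"
    proof -
      have "UNIV \<times> C i \<in> sets \<gamma>1" using rect_borel[OF _ Cb[of i], of UNIV] G1(1) by simp
      then show ?thesis by (rule nn_integral_indicator)
    qed
    also have "\<dots> \<le> emeasure \<kappa> (C i)" using g1 Cb[of i] by (simp add: partial_plan_def)
    also have "\<dots> = ennreal (measure \<kappa> (C i))" using Kp.emeasure_eq_measure by simp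
    finally show ?thesis by (simp add: ennreal_le_iff)
  qed
  have bik: "bi i \<le> measure \<kappa> (C i)" for i
  proof -
    have "ennreal (bi i) = (\<integral>\<^sup>+v. indicator (C i) (fst v) \<partial>\<gamma>2)" by (rule b_eq[symmetric])
    also have "\<dots> = (\<integral>\<^sup>+v. indicator (C i \<times> UNIV) v \<partial>\<gamma>2)"
      by (intro nn_integral_cong) (auto simp: indicator_def mem_Times_iff)
    also have "\<dots> = emeasure \<gamma>2 (C i \<times> UNIV)"
    proof -
      have "C i \<times> UNIV \<in> sets \<gamma>2" using rect_borel[OF Cb[of i], of UNIV] G2(1) by simp
      then show ?thesis by (rule nn_integral_indicator)
    qed
    also have "\<dots> \<le> emeasure \<kappa> (C i)" using g2 Cb[of i] by (simp add: partial_plan_def)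
    also have "\<dots> = ennreal (measure \<kappa> (C i))" using Kp.emeasure_eq_measure by simp
    finally show ?thesis by (simp add: ennreal_le_iff)
  qed
  have suma: "(\<Sum>i<n. ai i) = \<alpha>1"
  proof -
    have "ennreal (\<Sum>i<n. ai i) = (\<Sum>i<n. ennreal (ai i))" by (simp add: a_nonneg)
    also have "\<dots> = (\<Sum>i<n. \<integral>\<^sup>+u. indicator (C i) (snd u) * 1 \<partial>\<gamma>1)" by (simp add: a_eq)
    also have "\<dots> = (\<integral>\<^sup>+u. 1 \<partial>\<gamma>1)" by (rule part1) simp
    also have "\<dots> = ennreal \<alpha>1" using G1 by simp
    finally show ?thesis using a1 by (simp add: a_nonneg sum_nonneg)
  qed
  have sumb: "(\<Sum>i<n. bi i) = \<alpha>2"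
  proof -
    have "ennreal (\<Sum>i<n. bi i) = (\<Sum>i<n. ennreal (bi i))" by (simp add: b_nonneg)
    also have "\<dots> = (\<Sum>i<n. \<integral>\<^sup>+v. indicator (C i) (fst v) * 1 \<partial>\<gamma>2)" by (simp add: b_eq)
    also have "\<dots> = (\<integral>\<^sup>+v. 1 \<partial>\<gamma>2)" by (rule part2) simp
    also have "\<dots> = ennreal \<alpha>2" using G2 by simp
    finally show ?thesis using a2 by (simp add: b_nonneg sum_nonneg)
  qed
  have sumk: "(\<Sum>i<n. measure \<kappa> (C i)) = 1"
  proof -
    have "(\<Sum>i<n. emeasure \<kappa> (C i)) = emeasure \<kappa> (\<Union>i<n. C i)"
    proof (rule sum_emeasure)
      show "C ` {..<n} \<subseteq> sets \<kappa>" using Cb K(2) by (intro image_subsetI) simp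
    qed (use Cd in simp_all)
    also have "\<dots> = 1" using Cc K(4) by simp
    finally have "ennreal (\<Sum>i<n. measure \<kappa> (C i)) = 1"
      using Kp.emeasure_eq_measure by simp
    then show ?thesis by simp
  qed
  have mge: "\<alpha>1 + \<alpha>2 - 1 \<le> m"
  proof -
    have "\<alpha>1 + \<alpha>2 - 1 = (\<Sum>i<n. ai i + bi i - measure \<kappa> (C i))"
      using suma sumb sumk by (simp add: sum.distrib sum_subtractf)
    also have "\<dots> \<le> m" unfolding m_def
    proof (intro sum_mono)
      fix i
      show "ai i + bi i - measure \<kappa> (C i) \<le> min (ai i) (bi i)"
        using aik[of i] bik[of i] a_nonneg[of i] b_nonneg[of i] by (simp add: min_def)
    qed
    finally show ?thesis .
  qed
  have am: "\<alpha> \<le> m" using al(2) mge by linarith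
  have m0: "0 \<le> m" unfolding m_def using a_nonneg b_nonneg by (intro sum_nonneg) simp
  have plan0: "partial_plan \<mu> \<nu> m sig" unfolding partial_plan_def
  proof (intro conjI ballI)
    show "sets sig = sets borel" by (rule sets_sig)
    show "emeasure sig (space sig) = ennreal m"
      unfolding sig_mass m_def using a_nonneg b_nonneg by simp
  next
    fix A :: "'a set" assume A: "A \<in> sets borel"
    have "emeasure sig (A \<times> UNIV) \<le> emeasure \<gamma>1 (A \<times> UNIV)" by (rule marg1[OF A])
    also have "\<dots> \<le> emeasure \<mu> A" using g1 A by (simp add: partial_plan_def)
    finally show "emeasure sig (A \<times> UNIV) \<le> emeasure \<mu> A" .
  next
    fix B :: "'a set" assume B: "B \<in> sets borel"
    have "emeasure sig (UNIV \<times> B) \<le> emeasure \<gamma>2 (UNIV \<times> B)" by (rule marg2[OF B])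
    also have "\<dots> \<le> emeasure \<nu> B" using g2 B by (simp add: partial_plan_def)
    finally show "emeasure sig (UNIV \<times> B) \<le> emeasure \<nu> B" .
  qed
  have c1: "cst p \<gamma>1 \<le> ennreal (wcost p \<gamma>1 powr p)"
    using cst_eq[OF cst_plan_finite[OF g1 pp d1] pp] by simp
  have c2: "cst p \<gamma>2 \<le> ennreal (wcost p \<gamma>2 powr p)"
    using cst_eq[OF cst_plan_finite[OF g2 pp d1] pp] by simp
  have mass1: "emeasure \<gamma>1 (space \<gamma>1) \<le> 1" using G1 a1 by (simp add: ennreal_le_1)
  have "cst p sig \<le> ennreal ((wcost p \<gamma>1 + wcost p \<gamma>2 + e) powr p)"
    by (rule cost_bound[OF p e diam d1 mass1 wcost_nonneg c1 wcost_nonneg c2])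
  then have w0: "wcost p sig \<le> wcost p \<gamma>1 + wcost p \<gamma>2 + e"
    by (rule wcost_le) (use wcost_nonneg[of p \<gamma>1] wcost_nonneg[of p \<gamma>2] e pp in auto)
  obtain \<sigma> where "partial_plan \<mu> \<nu> \<alpha> \<sigma>" "wcost p \<sigma> \<le> wcost p sig"
    using plan_reduce[OF plan0 al(1) am pp d1] by blast
  then show ?thesis using w0 by auto
qed

lemma W_tri:
  fixes \<mu> \<kappa> \<nu> :: "'a::metric_space measure"
  assumes cpt: "compact (UNIV::'a set)" and d1: "\<forall>x y::'a. dist x y \<le> 1" and p: "p \<ge> 1"
    and mu: "prob_dist \<mu>" and ka: "prob_dist \<kappa>" and nu: "prob_dist \<nu>"
    and a1: "0 \<le> \<alpha>1" "\<alpha>1 \<le> 1" and a2: "0 \<le> \<alpha>2" "\<alpha>2 \<le> 1"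
    and al: "0 \<le> \<alpha>" "\<alpha> \<le> \<alpha>1 + \<alpha>2 - 1"
  shows "partial_W p \<alpha> \<mu> \<nu> \<le> partial_W p \<alpha>1 \<mu> \<kappa> + partial_W p \<alpha>2 \<kappa> \<nu>"
proof (rule field_le_epsilon)
  fix t :: real assume t: "0 < t"
  then have t3: "t/3 > 0" by simp
  obtain \<gamma>1 where g1: "partial_plan \<mu> \<kappa> \<alpha>1 \<gamma>1" "wcost p \<gamma>1 < partial_W p \<alpha>1 \<mu> \<kappa> + t/3"
    using W_approx[OF plan_exists[OF cpt mu ka a1] t3] by blast
  obtain \<gamma>2 where g2: "partial_plan \<kappa> \<nu> \<alpha>2 \<gamma>2" "wcost p \<gamma>2 < partial_W p \<alpha>2 \<kappa> \<nu> + t/3"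
    using W_approx[OF plan_exists[OF cpt ka nu a2] t3] by blast
  obtain \<sigma> where s: "partial_plan \<mu> \<nu> \<alpha> \<sigma>" "wcost p \<sigma> \<le> wcost p \<gamma>1 + wcost p \<gamma>2 + t/3"
    using glue[OF cpt d1 p ka g1(1) g2(1) a1 a2 al t3] by blast
  have "partial_W p \<alpha> \<mu> \<nu> \<le> wcost p \<sigma>" by (rule W_lower[OF s(1)])
  then show "partial_W p \<alpha> \<mu> \<nu> \<le> partial_W p \<alpha>1 \<mu> \<kappa> + partial_W p \<alpha>2 \<kappa> \<nu> + t"
    using s(2) g1(2) g2(2) by linarith
qed

definition Sset :: "real \<Rightarrow> real \<Rightarrow> 'a::metric_space measure \<Rightarrow> 'a measure \<Rightarrow> real set" where
  "Sset p k \<mu> \<nu> = {\<epsilon> \<in> {0..1}. partial_W p (1 - \<epsilon>) \<mu> \<nu> \<le> k * \<epsilon>}"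

lemma RPW_Sset: "RPW p k \<mu> \<nu> = Inf (Sset p k \<mu> \<nu>)"
  by (simp add: RPW_def Sset_def)

lemma Sset_bdd: "bdd_below (Sset p k \<mu> \<nu>)"
  by (rule bdd_belowI[of _ 0]) (auto simp: Sset_def)

lemma one_in_Sset:
  fixes \<mu> \<nu> :: "'a::metric_space measure"
  assumes cpt: "compact (UNIV::'a set)" and d1: "\<forall>x y::'a. dist x y \<le> 1" and p: "p \<ge> 1" and k: "k \<ge> 0"
    and mu: "prob_dist \<mu>" and nu: "prob_dist \<nu>"
  shows "1 \<in> Sset p k \<mu> \<nu>"
proof -
  have pp: "p > 0" using p by simp
  obtain \<gamma> where g: "partial_plan \<mu> \<nu> 0 \<gamma>" using plan_exists[OF cpt mu nu] by fastforce
  have "cst p \<gamma> \<le> emeasure \<gamma> (space \<gamma>)" by (rule cst_le_mass[OF plan_basic(1)[OF g] pp d1])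
  also have "\<dots> = 0" using plan_basic[OF g] by simp
  finally have "cst p \<gamma> = 0" by simp
  then have "wcost p \<gamma> = 0" by (simp add: wcost_cst)
  then have "partial_W p 0 \<mu> \<nu> \<le> 0" using W_lower[OF g, of p] by simp
  then show ?thesis using k by (simp add: Sset_def)
qed

lemma RPW_bounds:
  fixes \<mu> \<nu> :: "'a::metric_space measure"
  assumes cpt: "compact (UNIV::'a set)" and d1: "\<forall>x y::'a. dist x y \<le> 1" and p: "p \<ge> 1" and k: "k \<ge> 0"
    and mu: "prob_dist \<mu>" and nu: "prob_dist \<nu>"
  shows "0 \<le> RPW p k \<mu> \<nu>" "RPW p k \<mu> \<nu> \<le> 1"
proof -
  have one: "1 \<in> Sset p k \<mu> \<nu>" by (rule one_in_Sset[OF assms])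
  show "RPW p k \<mu> \<nu> \<le> 1" unfolding RPW_Sset by (rule cInf_lower[OF one Sset_bdd])
  show "0 \<le> RPW p k \<mu> \<nu>" unfolding RPW_Sset
    using one by (intro cInf_greatest) (auto simp: Sset_def)
qed

lemma RPW_self:
  fixes \<mu> :: "'a::metric_space measure"
  assumes p: "p \<ge> 1" and k: "k \<ge> 0" and mu: "prob_dist \<mu>"
  shows "RPW p k \<mu> \<mu> = 0"
proof -
  have pp: "p > 0" using p by simp
  note D = diag_plan[OF mu pp]
  have "partial_W p 1 \<mu> \<mu> \<le> 0" using W_lower[OF D(1), of p] D(2) by simp
  then have z: "0 \<in> Sset p k \<mu> \<mu>" by (simp add: Sset_def)
  show ?thesis unfolding RPW_Sset
    by (rule cInf_eq_minimum[OF z]) (simp add: Sset_def)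
qed

lemma RPW_sym:
  fixes \<mu> \<nu> :: "'a::metric_space measure"
  shows "RPW p k \<mu> \<nu> = RPW p k \<nu> \<mu>"
  unfolding RPW_def using W_sym[of p _ \<mu> \<nu>] by simp

lemma RPW_tri:
  fixes \<mu> \<kappa> \<nu> :: "'a::metric_space measure"
  assumes cpt: "compact (UNIV::'a set)" and d1: "\<forall>x y::'a. dist x y \<le> 1" and p: "p \<ge> 1" and k: "k \<ge> 0"
    and mu: "prob_dist \<mu>" and ka: "prob_dist \<kappa>" and nu: "prob_dist \<nu>"
  shows "RPW p k \<mu> \<nu> \<le> RPW p k \<mu> \<kappa> + RPW p k \<kappa> \<nu>"
proof -
  define r1 where "r1 = RPW p k \<mu> \<kappa>"
  define r2 where "r2 = RPW p k \<kappa> \<nu>"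
  have r1b: "0 \<le> r1" using RPW_bounds[OF cpt d1 p k mu ka] by (simp add: r1_def)
  have r2b: "0 \<le> r2" using RPW_bounds[OF cpt d1 p k ka nu] by (simp add: r2_def)
  have one: "RPW p k \<mu> \<nu> \<le> 1" using RPW_bounds[OF cpt d1 p k mu nu] by simp
  have mem: "\<epsilon> \<in> Sset p k \<mu> \<nu>" if e: "r1 + r2 < \<epsilon>" "\<epsilon> \<le> 1" for \<epsilon>
  proof -
    define s where "s = \<epsilon> - r1 - r2"
    have s: "s > 0" using e by (simp add: s_def)
    have ne1: "Sset p k \<mu> \<kappa> \<noteq> {}" using one_in_Sset[OF cpt d1 p k mu ka] by blast
    have ne2: "Sset p k \<kappa> \<nu> \<noteq> {}" using one_in_Sset[OF cpt d1 p k ka nu] by blast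
    have "Inf (Sset p k \<mu> \<kappa>) < r1 + s/2" using s by (simp add: r1_def RPW_Sset)
    then obtain e1 where e1: "e1 \<in> Sset p k \<mu> \<kappa>" "e1 < r1 + s/2" using cInf_lessD[OF ne1] by blast
    have "Inf (Sset p k \<kappa> \<nu>) < r2 + s/2" using s by (simp add: r2_def RPW_Sset)
    then obtain e2 where e2: "e2 \<in> Sset p k \<kappa> \<nu>" "e2 < r2 + s/2" using cInf_lessD[OF ne2] by blast
    have e1b: "0 \<le> e1" "e1 \<le> 1" "partial_W p (1 - e1) \<mu> \<kappa> \<le> k * e1" using e1(1) by (auto simp: Sset_def)
    have e2b: "0 \<le> e2" "e2 \<le> 1" "partial_W p (1 - e2) \<kappa> \<nu> \<le> k * e2" using e2(1) by (auto simp: Sset_def)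
    have sum: "e1 + e2 \<le> \<epsilon>" using e1(2) e2(2) unfolding s_def by (smt (verit) field_sum_of_halves)
    have "partial_W p (1 - \<epsilon>) \<mu> \<nu> \<le> partial_W p (1 - e1) \<mu> \<kappa> + partial_W p (1 - e2) \<kappa> \<nu>"
      by (rule W_tri[OF cpt d1 p mu ka nu]) (use e1b e2b e sum in auto)
    also have "\<dots> \<le> k * e1 + k * e2" using e1b e2b by simp
    also have "\<dots> \<le> k * \<epsilon>" using k sum by (simp add: distrib_left[symmetric] mult_left_mono)
    finally show ?thesis using e r1b r2b by (simp add: Sset_def)
  qed
  show ?thesis
  proof (rule field_le_epsilon)
    fix t :: real assume t: "0 < t"
    show "RPW p k \<mu> \<nu> \<le> RPW p k \<mu> \<kappa> + RPW p k \<kappa> \<nu> + t"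
    proof (cases "r1 + r2 + t \<le> 1")
      case True
      have "r1 + r2 + t \<in> Sset p k \<mu> \<nu>" by (rule mem) (use t True in auto)
      then have "RPW p k \<mu> \<nu> \<le> r1 + r2 + t" unfolding RPW_Sset by (rule cInf_lower[OF _ Sset_bdd])
      then show ?thesis by (simp add: r1_def r2_def)
    next
      case False
      then show ?thesis using one by (simp add: r1_def r2_def)
    qed
  qed
qed

lemma step2:
  fixes \<mu> \<nu> :: "'a::metric_space measure"
  assumes d1: "\<forall>x y::'a. dist x y \<le> 1" and pp: "p > 0"
    and mu: "prob_dist \<mu>" and nu: "prob_dist \<nu>"
    and g: "partial_plan \<mu> \<nu> (1 - \<epsilon>) \<gamma>" and e0: "0 \<le> \<epsilon>" and e1: "\<epsilon> \<le> 1"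
    and F: "closed F" and r: "r > 0"
  shows "measure \<mu> F \<le> measure \<nu> {x. infdist x F < r} + (wcost p \<gamma> / r) powr p + \<epsilon>"
proof -
  note G = plan_basic[OF g]
  interpret gm: finite_measure \<gamma> by (rule G(4))
  note M = prob_dist_basic[OF mu] and N = prob_dist_basic[OF nu]
  interpret mp: prob_space \<mu> by (rule M(1))
  interpret np: prob_space \<nu> by (rule N(1))
  define Gr where "Gr = {x::'a. infdist x F < r}"
  define Bad where "Bad = {z::'a\<times>'a. r \<le> dist (fst z) (snd z)}"
  have oG: "open Gr" unfolding Gr_def
    by (rule open_Collect_less) (intro continuous_intros)+
  have cB: "closed Bad" unfolding Bad_def
    by (rule closed_Collect_le) (intro continuous_intros)+
  have Fb: "F \<in> sets borel" using F by simp
  have Gb: "Gr \<in> sets borel" using oG by simp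
  have sF: "F \<times> UNIV \<in> sets \<gamma>" using rect_borel[OF Fb, of UNIV] G(1) by simp
  have sFc: "(- F) \<times> UNIV \<in> sets \<gamma>" using rect_borel[of "- F" UNIV] Fb G(1) by simp
  have sG: "UNIV \<times> Gr \<in> sets \<gamma>" using rect_borel[OF _ Gb, of UNIV] G(1) by simp
  have sB: "Bad \<in> sets \<gamma>" using cB G(1) by simp
  have mU: "measure \<gamma> UNIV = 1 - \<epsilon>" using G(3) e1 by (simp add: measure_def)
  have "measure \<gamma> (F \<times> UNIV \<union> (- F) \<times> UNIV) = measure \<gamma> (F \<times> UNIV) + measure \<gamma> ((- F) \<times> UNIV)"
    by (rule gm.finite_measure_Union[OF sF sFc]) auto
  moreover have "F \<times> (UNIV::'a set) \<union> (- F) \<times> UNIV = UNIV" by auto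
  ultimately have a1: "measure \<gamma> (F \<times> UNIV) + measure \<gamma> ((- F) \<times> UNIV) = 1 - \<epsilon>" using mU by simp
  have "emeasure \<gamma> ((- F) \<times> UNIV) \<le> emeasure \<mu> (- F)"
    using g Fb by (simp add: partial_plan_def)
  then have a2: "measure \<gamma> ((- F) \<times> UNIV) \<le> measure \<mu> (- F)"
    by (simp add: gm.emeasure_eq_measure mp.emeasure_eq_measure ennreal_le_iff)
  have a3: "measure \<mu> (- F) = 1 - measure \<mu> F"
    using mp.prob_compl[of F] Fb M(2,3) by (simp add: Compl_eq_Diff_UNIV)
  have sub: "F \<times> UNIV \<subseteq> (UNIV \<times> Gr) \<union> Bad"
  proof
    fix z assume "z \<in> F \<times> (UNIV::'a set)"
    then obtain x y where z: "z = (x,y)" "x \<in> F" by auto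
    show "z \<in> (UNIV \<times> Gr) \<union> Bad"
    proof (cases "r \<le> dist x y")
      case True then show ?thesis using z by (simp add: Bad_def)
    next
      case False
      have "infdist y F \<le> dist y x" by (rule infdist_le[OF z(2)])
      then have "y \<in> Gr" using False by (simp add: Gr_def dist_commute)
      then show ?thesis using z by simp
    qed
  qed
  have b1: "measure \<gamma> (F \<times> UNIV) \<le> measure \<gamma> (UNIV \<times> Gr) + measure \<gamma> Bad"
  proof -
    have "measure \<gamma> (F \<times> UNIV) \<le> measure \<gamma> ((UNIV \<times> Gr) \<union> Bad)"
      by (rule gm.finite_measure_mono[OF sub]) (use sG sB in simp)
    also have "\<dots> \<le> measure \<gamma> (UNIV \<times> Gr) + measure \<gamma> Bad"
      by (rule measure_Un_le[OF sG sB])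
    finally show ?thesis .
  qed
  have "emeasure \<gamma> (UNIV \<times> Gr) \<le> emeasure \<nu> Gr"
    using g Gb by (simp add: partial_plan_def)
  then have c1: "measure \<gamma> (UNIV \<times> Gr) \<le> measure \<nu> Gr"
    by (simp add: gm.emeasure_eq_measure np.emeasure_eq_measure ennreal_le_iff)
  have "ennreal (r powr p) * emeasure \<gamma> Bad = (\<integral>\<^sup>+z. ennreal (r powr p) * indicator Bad z \<partial>\<gamma>)"
    by (rule nn_integral_cmult_indicator[OF sB, symmetric])
  also have "\<dots> \<le> cst p \<gamma>"
    unfolding cst_def
  proof (intro nn_integral_mono)
    fix z :: "'a \<times> 'a"
    show "ennreal (r powr p) * indicator Bad z \<le> ennreal (dist (fst z) (snd z) powr p)"
    proof (cases "z \<in> Bad")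
      case True
      then have "r powr p \<le> dist (fst z) (snd z) powr p" using r pp by (intro powr_mono2) (auto simp: Bad_def)
      then show ?thesis using True by simp
    qed simp
  qed
  also have "\<dots> = ennreal (wcost p \<gamma> powr p)" by (rule cst_eq[OF cst_plan_finite[OF g pp d1] pp])
  finally have "ennreal (r powr p * measure \<gamma> Bad) \<le> ennreal (wcost p \<gamma> powr p)"
    by (simp add: gm.emeasure_eq_measure ennreal_mult[symmetric])
  then have "r powr p * measure \<gamma> Bad \<le> wcost p \<gamma> powr p" by (simp add: ennreal_le_iff)
  then have d: "measure \<gamma> Bad \<le> (wcost p \<gamma> / r) powr p"
    using r by (simp add: powr_divide wcost_nonneg field_simps)
  show ?thesis using a1 a2 a3 b1 c1 d by (simp add: Gr_def)
qed

lemma zero_closed_aux: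
  fixes \<mu> \<nu> :: "'a::metric_space measure"
  assumes cpt: "compact (UNIV::'a set)" and d1: "\<forall>x y::'a. dist x y \<le> 1" and p: "p \<ge> 1" and k: "k \<ge> 0"
    and mu: "prob_dist \<mu>" and nu: "prob_dist \<nu>" and R0: "RPW p k \<mu> \<nu> = 0"
    and F: "closed F" and r: "r > 0"
  shows "measure \<mu> F \<le> measure \<nu> {x. infdist x F < r}"
proof (rule field_le_epsilon)
  fix t :: real assume t: "0 < t"
  have pp: "p > 0" using p by simp
  define \<tau> where "\<tau> = min (t/2) (r * min 1 (t/2) / (k+1))"
  have tau: "\<tau> > 0" using t r k by (simp add: \<tau>_def)
  have ne: "Sset p k \<mu> \<nu> \<noteq> {}" using one_in_Sset[OF cpt d1 p k mu nu] by blast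
  have "Inf (Sset p k \<mu> \<nu>) < \<tau>" using R0 tau by (simp add: RPW_Sset)
  then obtain \<epsilon> where e: "\<epsilon> \<in> Sset p k \<mu> \<nu>" "\<epsilon> < \<tau>" using cInf_lessD[OF ne] by blast
  have eb: "0 \<le> \<epsilon>" "\<epsilon> \<le> 1" "partial_W p (1 - \<epsilon>) \<mu> \<nu> \<le> k * \<epsilon>" using e(1) by (auto simp: Sset_def)
  obtain \<gamma> where g: "partial_plan \<mu> \<nu> (1 - \<epsilon>) \<gamma>" "wcost p \<gamma> < partial_W p (1 - \<epsilon>) \<mu> \<nu> + \<tau>"
  proof -
    have "0 \<le> 1 - \<epsilon>" "1 - \<epsilon> \<le> 1" using eb by auto
    from W_approx[OF plan_exists[OF cpt mu nu this] tau] show ?thesis using that by blast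
  qed
  have "k * \<epsilon> \<le> k * \<tau>" using k e(2) by (intro mult_left_mono) auto
  then have w: "wcost p \<gamma> < (k+1) * \<tau>" using g(2) eb(3) by (simp add: distrib_right)
  have s2: "measure \<mu> F \<le> measure \<nu> {x. infdist x F < r} + (wcost p \<gamma> / r) powr p + \<epsilon>"
    by (rule step2[OF d1 pp mu nu g(1) eb(1,2) F r])
  define x where "x = wcost p \<gamma> / r"
  have x0: "0 \<le> x" using r by (simp add: x_def wcost_nonneg)
  have "x < (k+1) * \<tau> / r" using w r by (simp add: x_def divide_strict_right_mono)
  also have "(k+1) * \<tau> / r \<le> min 1 (t/2)"
  proof -
    have "(k+1) * \<tau> \<le> (k+1) * (r * min 1 (t/2) / (k+1))" using k by (intro mult_left_mono) (auto simp: \<tau>_def)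
    also have "\<dots> = r * min 1 (t/2)" using k by simp
    finally have h: "(k+1) * \<tau> \<le> r * min 1 (t/2)" .
    show ?thesis by (subst pos_divide_le_eq[OF r]) (metis h mult.commute)
  qed
  finally have xl: "x < min 1 (t/2)" .
  have "x powr p \<le> t/2"
  proof (cases "x = 0")
    case True then show ?thesis using t by simp
  next
    case False
    then have "x powr p \<le> x" using x0 xl p by (intro powr_le_one_le) auto
    then show ?thesis using xl by simp
  qed
  moreover have "\<epsilon> \<le> t/2" using e(2) by (simp add: \<tau>_def)
  ultimately show "measure \<mu> F \<le> measure \<nu> {x. infdist x F < r} + t"
    using s2 by (simp add: x_def)
qed

lemma zero_closed:
  fixes \<mu> \<nu> :: "'a::metric_space measure"
  assumes cpt: "compact (UNIV::'a set)" and d1: "\<forall>x y::'a. dist x y \<le> 1" and p: "p \<ge> 1" and k: "k \<ge> 0"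
    and mu: "prob_dist \<mu>" and nu: "prob_dist \<nu>" and R0: "RPW p k \<mu> \<nu> = 0"
    and F: "closed F"
  shows "emeasure \<mu> F \<le> emeasure \<nu> F"
proof (cases "F = {}")
  case True then show ?thesis by simp
next
  case False
  note M = prob_dist_basic[OF mu] and N = prob_dist_basic[OF nu]
  interpret mp: prob_space \<mu> by (rule M(1))
  interpret np: prob_space \<nu> by (rule N(1))
  define A where "A n = {x::'a. infdist x F < 1 / real (Suc n)}" for n
  have oA: "open (A n)" for n unfolding A_def
    by (rule open_Collect_less) (intro continuous_intros)+
  have sA: "range A \<subseteq> sets \<nu>" using oA N(2) by auto
  have dA: "decseq A"
  proof (rule decseq_SucI)
    fix n
    have "1 / real (Suc (Suc n)) \<le> 1 / real (Suc n)" by (simp add: frac_le)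
    then show "A (Suc n) \<subseteq> A n" by (auto simp: A_def)
  qed
  have iA: "(\<Inter>n. A n) = F"
  proof (intro equalityI subsetI)
    fix x assume x: "x \<in> (\<Inter>n. A n)"
    have "infdist x F \<le> 0"
    proof (rule ccontr)
      assume "\<not> infdist x F \<le> 0"
      then have pos: "infdist x F > 0" by simp
      then obtain n where n: "1 / real (Suc n) < infdist x F" using nat_approx_posE by blast
      from x have "x \<in> A n" by blast
      then show False using n by (simp add: A_def)
    qed
    then have "infdist x F = 0" using infdist_nonneg[of x F] by simp
    then show "x \<in> F" using in_closed_iff_infdist_zero[OF F False] by simp
  next
    fix x assume "x \<in> F"
    then have "infdist x F = 0" using in_closed_iff_infdist_zero[OF F False] by simp
    then show "x \<in> (\<Inter>n. A n)" by (simp add: A_def)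
  qed
  have le: "emeasure \<mu> F \<le> emeasure \<nu> (A n)" for n
  proof -
    have "measure \<mu> F \<le> measure \<nu> (A n)" unfolding A_def
      by (rule zero_closed_aux[OF cpt d1 p k mu nu R0 F]) simp
    then show ?thesis by (simp add: mp.emeasure_eq_measure np.emeasure_eq_measure)
  qed
  have "emeasure \<mu> F \<le> (INF n. emeasure \<nu> (A n))" by (rule INF_greatest) (rule le)
  also have "\<dots> = emeasure \<nu> (\<Inter>n. A n)" by (rule INF_emeasure_decseq[OF sA dA]) simp
  finally show ?thesis using iA by simp
qed

lemma zero_eq:
  fixes \<mu> \<nu> :: "'a::metric_space measure"
  assumes cpt: "compact (UNIV::'a set)" and d1: "\<forall>x y::'a. dist x y \<le> 1" and p: "p \<ge> 1" and k: "k \<ge> 0"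
    and mu: "prob_dist \<mu>" and nu: "prob_dist \<nu>" and R0: "RPW p k \<mu> \<nu> = 0"
  shows "\<mu> = \<nu>"
proof -
  note M = prob_dist_basic[OF mu] and N = prob_dist_basic[OF nu]
  have R0': "RPW p k \<nu> \<mu> = 0" using R0 RPW_sym[of p k \<mu> \<nu>] by simp
  have sb: "sets (borel::'a measure) = sigma_sets UNIV (Collect closed)"
    by (subst borel_eq_closed) simp
  show ?thesis
  proof (rule measure_eqI_generator_eq[where E = "Collect closed" and \<Omega> = UNIV and A = "\<lambda>_. UNIV"])
    show "Int_stable (Collect closed :: 'a set set)" by (auto simp: Int_stable_def)
    show "Collect closed \<subseteq> Pow (UNIV :: 'a set)" by simp
    fix X :: "'a set" assume "X \<in> Collect closed"
    then have X: "closed X" by simp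
    show "emeasure \<mu> X = emeasure \<nu> X"
      using zero_closed[OF cpt d1 p k mu nu R0 X] zero_closed[OF cpt d1 p k nu mu R0' X] by simp
  next
    show "sets \<mu> = sigma_sets UNIV (Collect closed)" using M(2) sb by simp
    show "sets \<nu> = sigma_sets UNIV (Collect closed)" using N(2) sb by simp
    show "range (\<lambda>_. UNIV) \<subseteq> Collect closed" by auto
    show "(\<Union>i::nat. UNIV) = (UNIV::'a set)" by simp
    fix i :: nat show "emeasure \<mu> UNIV \<noteq> \<infinity>" using M(4) by simp
  qed
qed

theorem theorem2p1:
  fixes p k :: real
  assumes "p \<ge> 1" and "k \<ge> 0"
    and "compact (UNIV :: 'a::metric_space set)"
    and "\<forall>x y :: 'a. dist x y \<le> 1"
  shows "\<forall>\<mu> \<nu> \<kappa> :: 'a measure. prob_dist \<mu> \<and> prob_dist \<nu> \<and> prob_dist \<kappa> \<longrightarrow>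
           RPW p k \<mu> \<mu> = 0 \<and>
           (\<mu> \<noteq> \<nu> \<longrightarrow> RPW p k \<mu> \<nu> > 0) \<and>
           RPW p k \<mu> \<nu> = RPW p k \<nu> \<mu> \<and>
           RPW p k \<mu> \<nu> \<le> RPW p k \<mu> \<kappa> + RPW p k \<kappa> \<nu>"
proof (intro allI impI conjI)
  fix \<mu> \<nu> \<kappa> :: "'a measure"
  assume h: "prob_dist \<mu> \<and> prob_dist \<nu> \<and> prob_dist \<kappa>"
  then have mu: "prob_dist \<mu>" and nu: "prob_dist \<nu>" and ka: "prob_dist \<kappa>" by auto
  show "RPW p k \<mu> \<mu> = 0" by (rule RPW_self[OF assms(1,2) mu])
  show "RPW p k \<mu> \<nu> = RPW p k \<nu> \<mu>" by (rule RPW_sym)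
  show "RPW p k \<mu> \<nu> \<le> RPW p k \<mu> \<kappa> + RPW p k \<kappa> \<nu>"
    by (rule RPW_tri[OF assms(3,4,1,2) mu ka nu])
  assume ne: "\<mu> \<noteq> \<nu>"
  show "RPW p k \<mu> \<nu> > 0"
  proof (rule ccontr)
    assume "\<not> RPW p k \<mu> \<nu> > 0"
    then have "RPW p k \<mu> \<nu> = 0" using RPW_bounds(1)[OF assms(3,4,1,2) mu nu] by simp
    then have "\<mu> = \<nu>" by (rule zero_eq[OF assms(3,4,1,2) mu nu])
    then show False using ne by simp
  qed
qed

end
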